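(* Let $\mathfrak{F}$ be either $\mathrm{CTO}$ or $\mathrm{GPC}$, and let $A$ and $B$ be two physical systems with relatively non-degenerate Hamiltonians. Let $\rho^A$ be a state of $A$ and $\sigma^B$ a state of $B$, and let $\mathbf{r}^A,\mathbf{s}^B,\mathbf{g}^A,\mathbf{g}^B$ be the probability vectors of diagonal entries (in the energy eigenbases) of $\rho^A,\sigma^B,\gamma^A,\gamma^B$ respectively. Then the following are equivalent: (1) there exists $\mathcal{E}\in\mathfrak{F}(A\to B)$ with $\mathcal{E}(\rho^A)=\sigma^B$ (and $\mathcal{E}(\gamma^A)=\gamma^B$); (2) $\sigma^B$ is diagonal in the energy eigenbasis of $B$ and $(\mathbf{r}^A,\mathbf{g}^A)\succ(\mathbf{s}^B,\mathbf{g}^B)$.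
   Context: Each system $X$ is finite dimensional with Hamiltonian $H^X$ (Hermitian, positive semidefinite); composites of non-interacting systems have $H^{XY}=H^X\otimes I^Y+I^X\otimes H^Y$. For fixed inverse temperature $\beta>0$ the Gibbs state is $\gamma^X=e^{-\beta H^X}/\mathrm{Tr}[e^{-\beta H^X}]$. Hamiltonians $H^A=\sum_x a_x|x\rangle\langle x|$, $H^B=\sum_y b_y|y\rangle\langle y|$ are relatively non-degenerate if $a_x-a_{x'}=b_y-b_{y'}$ implies $x=x'$ and $y=y'$. A channel $\mathcal{E}:A\to B$ is time-translation covariant if $\mathcal{E}(e^{-iH^At}\rho e^{iH^At})=e^{-iH^Bt}\mathcal{E}(\rho)e^{iH^Bt}$ for all $t$ and states $\rho$. $\mathrm{GPC}(A\to B)$ is the set of time-translation covariant channels with $\mathcal{E}(\gamma^A)=\gamma^B$. A thermal operation is a channel obtainable by composing: appending systems in their Gibbs states, unitaries on a composite system commuting with its total Hamiltonian, and tracing out subsystems; $\mathrm{CTO}(A\to B)$ is the closure of the set of thermal operations from $A$ to $B$. For probability vectors, $(\mathbf{p},\mathbf{g})\succ(\mathbf{q},\mathbf{g}')$ (relative majorization) means there is a column stochastic matrix $E$ with $E\mathbf{p}=\mathbf{q}$ and $E\mathbf{g}=\mathbf{g}'$. *)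

theory Defs
  imports "HOL-Analysis.Analysis" "Jordan_Normal_Form.Matrix"
begin

(* A physical system is given by the list of energy levels of its Hamiltonian,
   H = diag(a_0,...,a_{n-1}) in the computational (energy eigen-)basis of C^n. *)

definition adj :: "complex mat \<Rightarrow> complex mat" where
  "adj M = mat (dim_col M) (dim_row M) (\<lambda>(i,j). cnj (M $$ (j,i)))"

definition ham :: "real list \<Rightarrow> complex mat" where
  "ham a = mat (length a) (length a) (\<lambda>(i,j). if i = j then complex_of_real (a ! i) else 0)"

definition valid_ham :: "real list \<Rightarrow> bool" where
  "valid_ham a \<longleftrightarrow> a \<noteq> [] \<and> (\<forall>x \<in> set a. 0 \<le> x)"

definition partition_fn :: "real \<Rightarrow> real list \<Rightarrow> real" where
  "partition_fn \<beta> a = (\<Sum>i<length a. exp (- \<beta> * a ! i))"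

definition gibbs :: "real \<Rightarrow> real list \<Rightarrow> complex mat" where
  "gibbs \<beta> a = mat (length a) (length a)
     (\<lambda>(i,j). if i = j then complex_of_real (exp (- \<beta> * a ! i) / partition_fn \<beta> a) else 0)"

definition evol :: "real list \<Rightarrow> real \<Rightarrow> complex mat" where
  "evol a t = mat (length a) (length a)
     (\<lambda>(i,j). if i = j then exp (- \<i> * complex_of_real (a ! i * t)) else 0)"

definition psd :: "nat \<Rightarrow> complex mat \<Rightarrow> bool" where
  "psd n M \<longleftrightarrow> M \<in> carrier_mat n n \<and> adj M = M \<and>
     (\<forall>v :: nat \<Rightarrow> complex. 0 \<le> Re (\<Sum>i<n. \<Sum>j<n. cnj (v i) * M $$ (i,j) * v j))"

definition tr :: "complex mat \<Rightarrow> complex" where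
  "tr M = (\<Sum>i<dim_row M. M $$ (i,i))"

definition is_state :: "nat \<Rightarrow> complex mat \<Rightarrow> bool" where
  "is_state n \<rho> \<longleftrightarrow> psd n \<rho> \<and> tr \<rho> = 1"

(* Kronecker product, index (i,k) \<mapsto> i * dim(second) + k *)
definition kron :: "complex mat \<Rightarrow> complex mat \<Rightarrow> complex mat" where
  "kron M N = mat (dim_row M * dim_row N) (dim_col M * dim_col N)
     (\<lambda>(i,j). M $$ (i div dim_row N, j div dim_col N) * N $$ (i mod dim_row N, j mod dim_col N))"

definition ptrace2 :: "nat \<Rightarrow> nat \<Rightarrow> complex mat \<Rightarrow> complex mat" where
  "ptrace2 m k M = mat m m (\<lambda>(i,j). \<Sum>l<k. M $$ (i * k + l, j * k + l))"

definition ham_comp :: "real list \<Rightarrow> real list \<Rightarrow> complex mat" where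
  "ham_comp a c = kron (ham a) (1\<^sub>m (length c)) + kron (1\<^sub>m (length a)) (ham c)"

definition unitary :: "nat \<Rightarrow> complex mat \<Rightarrow> bool" where
  "unitary n U \<longleftrightarrow> U \<in> carrier_mat n n \<and> adj U * U = 1\<^sub>m n \<and> U * adj U = 1\<^sub>m n"

(* quantum channel (CPTP map) from C^{dA} to C^{dB}, in Kraus form;
   only its action on dA x dA matrices is relevant *)
definition msum :: "nat \<Rightarrow> nat \<Rightarrow> nat \<Rightarrow> (nat \<Rightarrow> complex mat) \<Rightarrow> complex mat" where
  "msum n m r f = mat n m (\<lambda>(i,j). \<Sum>k<r. f k $$ (i,j))"

definition channel :: "nat \<Rightarrow> nat \<Rightarrow> (complex mat \<Rightarrow> complex mat) \<Rightarrow> bool" where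
  "channel dA dB E \<longleftrightarrow> (\<exists>(r::nat) (K :: nat \<Rightarrow> complex mat).
      (\<forall>k < r. K k \<in> carrier_mat dB dA) \<and>
      msum dA dA r (\<lambda>k. adj (K k) * K k) = 1\<^sub>m dA \<and>
      (\<forall>X \<in> carrier_mat dA dA. E X = msum dB dB r (\<lambda>k. K k * X * adj (K k))))"

definition time_cov :: "real list \<Rightarrow> real list \<Rightarrow> (complex mat \<Rightarrow> complex mat) \<Rightarrow> bool" where
  "time_cov a b E \<longleftrightarrow> (\<forall>t :: real. \<forall>\<rho>. is_state (length a) \<rho> \<longrightarrow>
      E (evol a t * \<rho> * adj (evol a t)) = evol b t * E \<rho> * adj (evol b t))"

definition GPC :: "real \<Rightarrow> real list \<Rightarrow> real list \<Rightarrow> (complex mat \<Rightarrow> complex mat) set" where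
  "GPC \<beta> a b = {E. channel (length a) (length b) E \<and> time_cov a b E \<and> E (gibbs \<beta> a) = gibbs \<beta> b}"

(* thermal operation A \<rightarrow> B in its normal form:
   E(X) = Tr_{B'} [ W (X \<otimes> \<gamma>^{A'}) W^\<dagger> ],
   with A A' identified with B B' (energy-preservingly) and W unitary with
   W (H^A + H^{A'}) = (H^B + H^{B'}) W *)
definition thermal_op :: "real \<Rightarrow> real list \<Rightarrow> real list \<Rightarrow> (complex mat \<Rightarrow> complex mat) \<Rightarrow> bool" where
  "thermal_op \<beta> a b E \<longleftrightarrow> (\<exists>c d W.
      valid_ham c \<and> valid_ham d \<and>
      length a * length c = length b * length d \<and>
      unitary (length a * length c) W \<and>
      W * ham_comp a c = ham_comp b d * W \<and>
      (\<forall>X \<in> carrier_mat (length a) (length a).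
         E X = ptrace2 (length b) (length d) (W * kron X (gibbs \<beta> c) * adj W)))"

(* closure of the set of thermal operations (pointwise = norm convergence,
   as the maps are linear on a finite-dimensional space) *)
definition CTO :: "real \<Rightarrow> real list \<Rightarrow> real list \<Rightarrow> (complex mat \<Rightarrow> complex mat) set" where
  "CTO \<beta> a b = {E. channel (length a) (length b) E \<and>
     (\<exists>T :: nat \<Rightarrow> complex mat \<Rightarrow> complex mat. (\<forall>n. thermal_op \<beta> a b (T n)) \<and>
        (\<forall>X \<in> carrier_mat (length a) (length a). \<forall>i < length b. \<forall>j < length b.
           (\<lambda>n. T n X $$ (i,j)) \<longlonglongrightarrow> E X $$ (i,j)))}"

definition rel_nondeg :: "real list \<Rightarrow> real list \<Rightarrow> bool" where
  "rel_nondeg a b \<longleftrightarrow> (\<forall>x < length a. \<forall>x' < length a. \<forall>y < length b. \<forall>y' < length b.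
      a ! x - a ! x' = b ! y - b ! y' \<longrightarrow> x = x' \<and> y = y')"

definition diag_vec :: "complex mat \<Rightarrow> nat \<Rightarrow> real" where
  "diag_vec M i = Re (M $$ (i,i))"

definition rel_maj :: "nat \<Rightarrow> (nat \<Rightarrow> real) \<Rightarrow> (nat \<Rightarrow> real) \<Rightarrow> nat \<Rightarrow> (nat \<Rightarrow> real) \<Rightarrow> (nat \<Rightarrow> real) \<Rightarrow> bool" where
  "rel_maj n p g m q g' \<longleftrightarrow> (\<exists>E :: nat \<Rightarrow> nat \<Rightarrow> real.
      (\<forall>i < m. \<forall>j < n. 0 \<le> E i j) \<and> (\<forall>j < n. (\<Sum>i<m. E i j) = 1) \<and>
      (\<forall>i < m. (\<Sum>j<n. E i j * p j) = q i) \<and>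
      (\<forall>i < m. (\<Sum>j<n. E i j * g j) = g' i))"

end

theory Submission
  imports Defs
begin

lemma one_plus_of_nat_neq0[simp]: "1 + (of_nat N::complex) \<noteq> 0"
  using of_nat_neq_0[of N, where 'a=complex] unfolding of_nat_Suc .

lemma geom_avg_zero:
  fixes z :: complex
  assumes "norm z = 1" "z \<noteq> 1"
  shows "(\<lambda>N. (\<Sum>n<Suc N. z^n) / of_nat (Suc N)) \<longlonglongrightarrow> 0"
proof (rule Lim_null_comparison)
  let ?C = "2 / norm (1 - z)"
  show "eventually (\<lambda>N. norm ((\<Sum>n<Suc N. z^n) / of_nat (Suc N)) \<le> ?C * inverse (real (Suc N))) sequentially"
  proof (rule always_eventually, rule allI)
    fix N
    have nz: "norm (1 - z) > 0" using assms by auto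
    have "norm (\<Sum>n<Suc N. z^n) = norm ((1 - z^Suc N) / (1 - z))"
      by (simp only: sum_gp_strict assms(2) if_False)
    also have "\<dots> = norm (1 - z^Suc N) / norm (1 - z)" by (simp add: norm_divide)
    also have "\<dots> \<le> 2 / norm (1 - z)"
    proof (rule divide_right_mono)
      have "norm (1 - z^Suc N) \<le> norm (1::complex) + norm (z^Suc N)" by (rule norm_triangle_ineq4)
      also have "\<dots> = 2" using assms by (simp add: norm_power del: power_Suc)
      finally show "norm (1 - z^Suc N) \<le> 2" .
    qed (use nz in auto)
    finally have h: "norm (\<Sum>n<Suc N. z^n) \<le> ?C" .
    have "norm ((\<Sum>n<Suc N. z^n) / of_nat (Suc N)) = norm (\<Sum>n<Suc N. z^n) / real (Suc N)"
      by (simp only: norm_divide norm_of_nat)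
    also have "\<dots> \<le> ?C / real (Suc N)" using h by (intro divide_right_mono) auto
    finally show "norm ((\<Sum>n<Suc N. z^n) / of_nat (Suc N)) \<le> ?C * inverse (real (Suc N))"
      by (simp add: divide_inverse)
  qed
  show "(\<lambda>N. ?C * inverse (real (Suc N))) \<longlonglongrightarrow> 0"
    using tendsto_mult[OF tendsto_const LIMSEQ_inverse_real_of_nat, of ?C] by simp
qed

lemma fourier_coeff:
  fixes I :: "'i set" and c :: "'i \<Rightarrow> complex" and \<theta> :: "'i \<Rightarrow> real" and \<omega> :: real and d :: complex
  assumes fin: "finite I"
    and eq: "\<And>t::real. (\<Sum>i\<in>I. c i * exp (- \<i> * complex_of_real (\<theta> i * t))) = d * exp (- \<i> * complex_of_real (\<omega> * t))"
  shows "d = (\<Sum>i\<in>{i\<in>I. \<theta> i = \<omega>}. c i)"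
proof -
  define S where "S = (\<Sum>i\<in>I. \<bar>\<theta> i - \<omega>\<bar>)"
  have S0: "S \<ge> 0" unfolding S_def by (simp add: sum_nonneg)
  define \<tau> where "\<tau> = 1 / (1 + S)"
  have tau0: "\<tau> > 0" using S0 by (simp add: \<tau>_def)
  have small: "\<bar>\<theta> i - \<omega>\<bar> * \<tau> < 1" if "i \<in> I" for i
  proof -
    have "\<bar>\<theta> i - \<omega>\<bar> \<le> S" unfolding S_def
      using fin that by (auto intro: member_le_sum)
    then have "\<bar>\<theta> i - \<omega>\<bar> < 1 + S" by simp
    then show ?thesis using S0 by (simp add: \<tau>_def field_simps)
  qed
  define z where "z i = exp (- \<i> * complex_of_real ((\<theta> i - \<omega>) * \<tau>))" for i
  have zn: "z i ^ n = exp (- \<i> * complex_of_real (\<theta> i * (real n * \<tau>))) * exp (\<i> * complex_of_real (\<omega> * (real n * \<tau>)))" for i n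
  proof -
    have "z i ^ n = exp (of_nat n * (- \<i> * complex_of_real ((\<theta> i - \<omega>) * \<tau>)))"
      unfolding z_def by (rule exp_of_nat_mult[symmetric])
    also have "\<dots> = exp (- \<i> * complex_of_real (\<theta> i * (real n * \<tau>)) + \<i> * complex_of_real (\<omega> * (real n * \<tau>)))"
      by (rule arg_cong[where f=exp]) (simp add: algebra_simps)
    finally show ?thesis by (simp only: exp_add)
  qed
  have sumz: "(\<Sum>i\<in>I. c i * z i ^ n) = d" for n
  proof -
    have "(\<Sum>i\<in>I. c i * z i ^ n) = (\<Sum>i\<in>I. c i * exp (- \<i> * complex_of_real (\<theta> i * (real n * \<tau>)))) * exp (\<i> * complex_of_real (\<omega> * (real n * \<tau>)))"
      by (simp add: zn sum_distrib_right mult.assoc)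
    also have "\<dots> = d * exp (- \<i> * complex_of_real (\<omega> * (real n * \<tau>))) * exp (\<i> * complex_of_real (\<omega> * (real n * \<tau>)))"
      by (simp only: eq[of "real n * \<tau>"])
    also have "\<dots> = d * (exp (- \<i> * complex_of_real (\<omega> * (real n * \<tau>))) * exp (\<i> * complex_of_real (\<omega> * (real n * \<tau>))))"
      by (simp only: mult.assoc)
    also have "\<dots> = d" by (simp add: exp_add[symmetric])
    finally show ?thesis .
  qed
  define A where "A i N = (\<Sum>n<Suc N. z i ^ n) / of_nat (Suc N)" for i N
  have avg: "(\<Sum>i\<in>I. c i * A i N) = d" for N
  proof -
    have "(\<Sum>i\<in>I. c i * A i N) = (\<Sum>n<Suc N. \<Sum>i\<in>I. c i * z i ^ n) / of_nat (Suc N)"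
    proof -
      have "(\<Sum>i\<in>I. c i * A i N) = (\<Sum>i\<in>I. c i * (\<Sum>n<Suc N. z i ^ n)) / of_nat (Suc N)"
        unfolding A_def by (simp only: sum_divide_distrib[symmetric] times_divide_eq_right)
      also have "(\<Sum>i\<in>I. c i * (\<Sum>n<Suc N. z i ^ n)) = (\<Sum>i\<in>I. \<Sum>n<Suc N. c i * z i ^ n)"
        by (simp only: sum_distrib_left)
      also have "\<dots> = (\<Sum>n<Suc N. \<Sum>i\<in>I. c i * z i ^ n)" by (rule sum.swap)
      finally show ?thesis .
    qed
    also have "\<dots> = d" using of_nat_neq_0[of N, where 'a=complex] by (simp add: sumz del: of_nat_Suc)
    finally show ?thesis .
  qed
  define L where "L i = (if z i = 1 then 1 else (0::complex))" for i
  have lim: "(\<lambda>N. A i N) \<longlonglongrightarrow> L i" for i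
  proof (cases "z i = 1")
    case True
    then have "A i N = 1" for N unfolding A_def by simp
    then show ?thesis using True by (simp add: L_def)
  next
    case False
    have "norm (z i) = 1" unfolding z_def by (simp add: norm_exp_eq_Re)
    then show ?thesis using False geom_avg_zero unfolding A_def L_def by simp
  qed
  have "(\<lambda>N. \<Sum>i\<in>I. c i * A i N) \<longlonglongrightarrow> (\<Sum>i\<in>I. c i * L i)"
    by (intro tendsto_sum tendsto_mult tendsto_const lim)
  then have dL: "d = (\<Sum>i\<in>I. c i * L i)" using avg by (simp add: LIMSEQ_const_iff)
  have zeq: "z i = 1 \<longleftrightarrow> \<theta> i = \<omega>" if "i \<in> I" for i
  proof
    assume "\<theta> i = \<omega>" then show "z i = 1" by (simp add: z_def)
  next
    assume "z i = 1"
    then obtain k :: int where k: "- ((\<theta> i - \<omega>) * \<tau>) = of_int (2 * k) * pi"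
      unfolding z_def exp_eq_1 by auto
    have b: "\<bar>(\<theta> i - \<omega>) * \<tau>\<bar> < 1" using small[OF that] tau0 by (simp add: abs_mult)
    have "\<bar>of_int (2 * k) * pi\<bar> < 1" using b k by (metis abs_minus_cancel)
    then have "k = 0"
    proof -
      assume h: "\<bar>of_int (2 * k) * pi\<bar> < 1"
      show "k = 0"
      proof (rule ccontr)
        assume "k \<noteq> 0"
        then have "\<bar>real_of_int (2*k)\<bar> \<ge> 2" by linarith
        then have "\<bar>of_int (2 * k) * pi\<bar> \<ge> 2 * pi" by (simp add: abs_mult pi_gt_zero)
        then show False using h pi_gt3 by linarith
      qed
    qed
    then have "(\<theta> i - \<omega>) * \<tau> = 0" using k by simp
    then show "\<theta> i = \<omega>" using tau0 by simp
  qed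
  have "(\<Sum>i\<in>I. c i * L i) = (\<Sum>i\<in>I. if \<theta> i = \<omega> then c i else 0)"
    by (rule sum.cong) (auto simp: L_def zeq)
  also have "\<dots> = (\<Sum>i\<in>{i\<in>I. \<theta> i = \<omega>}. c i)"
    using fin by (simp add: sum.inter_filter)
  finally show ?thesis using dL by simp
qed


lemma mult_index:
  assumes "A \<in> carrier_mat n k" "B \<in> carrier_mat k m" "i < n" "j < m"
  shows "(A * B) $$ (i,j) = (\<Sum>u<k. A $$ (i,u) * B $$ (u,j))"
  using assms by (simp add: scalar_prod_def atLeast0LessThan)

lemma adj_carrier[simp]: "M \<in> carrier_mat n m \<Longrightarrow> adj M \<in> carrier_mat m n"
  by (auto simp: adj_def)

lemma adj_index[simp]: "i < dim_col M \<Longrightarrow> j < dim_row M \<Longrightarrow> adj M $$ (i,j) = cnj (M $$ (j,i))"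
  by (auto simp: adj_def)

lemma adj_dims[simp]: "dim_row (adj M) = dim_col M" "dim_col (adj M) = dim_row M"
  by (auto simp: adj_def)

lemma msum_index: "i < n \<Longrightarrow> j < m \<Longrightarrow> msum n m r f $$ (i,j) = (\<Sum>k<r. f k $$ (i,j))"
  by (simp add: msum_def)

lemma msum_carrier[simp]: "msum n m r f \<in> carrier_mat n m"
  by (simp add: msum_def)

definition exm :: "nat \<Rightarrow> nat \<Rightarrow> complex mat" where
  "exm n x = mat n n (\<lambda>(i,j). if i = x \<and> j = x then 1 else 0)"

lemma exm_carrier[simp]: "exm n x \<in> carrier_mat n n" by (simp add: exm_def)

lemma channel_formula:
  assumes "\<forall>k < r. K k \<in> carrier_mat dB dA" "X \<in> carrier_mat dA dA" "i < dB" "j < dB"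
  shows "msum dB dB r (\<lambda>k. K k * X * adj (K k)) $$ (i,j) =
     (\<Sum>k<r. \<Sum>u<dA. \<Sum>v<dA. K k $$ (i,u) * X $$ (u,v) * cnj (K k $$ (j,v)))"
proof -
  have "(K k * X * adj (K k)) $$ (i,j) = (\<Sum>u<dA. \<Sum>v<dA. K k $$ (i,u) * X $$ (u,v) * cnj (K k $$ (j,v)))"
    if "k < r" for k
  proof -
    have c: "K k \<in> carrier_mat dB dA" using assms that by auto
    have c2: "K k * X \<in> carrier_mat dB dA" using c assms by simp
    have "(K k * X * adj (K k)) $$ (i,j) = (\<Sum>v<dA. (K k * X) $$ (i,v) * adj (K k) $$ (v,j))"
      by (rule mult_index[OF c2 adj_carrier[OF c] assms(3,4)])
    also have "\<dots> = (\<Sum>v<dA. (K k * X) $$ (i,v) * cnj (K k $$ (j,v)))"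
      using c assms by (intro sum.cong refl) simp
    also have "\<dots> = (\<Sum>v<dA. (\<Sum>u<dA. K k $$ (i,u) * X $$ (u,v)) * cnj (K k $$ (j,v)))"
      by (intro sum.cong refl, subst mult_index[OF c assms(2) assms(3)]) auto
    also have "\<dots> = (\<Sum>v<dA. \<Sum>u<dA. K k $$ (i,u) * X $$ (u,v) * cnj (K k $$ (j,v)))"
      by (simp add: sum_distrib_right)
    also have "\<dots> = (\<Sum>u<dA. \<Sum>v<dA. K k $$ (i,u) * X $$ (u,v) * cnj (K k $$ (j,v)))"
      by (rule sum.swap)
    finally show ?thesis .
  qed
  then show ?thesis using assms by (simp add: msum_index)
qed

lemma channel_exm:
  assumes K: "\<forall>k < r. K k \<in> carrier_mat dB dA" and x: "x < dA" and y: "y < dB"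
  shows "msum dB dB r (\<lambda>k. K k * exm dA x * adj (K k)) $$ (y,y) =
     complex_of_real (\<Sum>k<r. (cmod (K k $$ (y,x)))\<^sup>2)"
proof -
  have "msum dB dB r (\<lambda>k. K k * exm dA x * adj (K k)) $$ (y,y) =
     (\<Sum>k<r. \<Sum>u<dA. \<Sum>v<dA. K k $$ (y,u) * exm dA x $$ (u,v) * cnj (K k $$ (y,v)))"
    using channel_formula[OF K exm_carrier y y] .
  also have "\<dots> = (\<Sum>k<r. K k $$ (y,x) * cnj (K k $$ (y,x)))"
  proof (rule sum.cong[OF refl])
    fix k
    have "(\<Sum>u<dA. \<Sum>v<dA. K k $$ (y,u) * exm dA x $$ (u,v) * cnj (K k $$ (y,v)))
        = (\<Sum>u<dA. if u = x then K k $$ (y,x) * cnj (K k $$ (y,x)) else 0)"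
    proof (rule sum.cong[OF refl])
      fix u assume u: "u \<in> {..<dA}"
      have "(\<Sum>v<dA. K k $$ (y,u) * exm dA x $$ (u,v) * cnj (K k $$ (y,v)))
          = (\<Sum>v<dA. if v = x \<and> u = x then K k $$ (y,x) * cnj (K k $$ (y,x)) else 0)"
        by (rule sum.cong[OF refl]) (use u in \<open>auto simp: exm_def\<close>)
      also have "\<dots> = (if u = x then K k $$ (y,x) * cnj (K k $$ (y,x)) else 0)"
        using x by (cases "u = x") auto
      finally show "(\<Sum>v<dA. K k $$ (y,u) * exm dA x $$ (u,v) * cnj (K k $$ (y,v))) = (if u = x then K k $$ (y,x) * cnj (K k $$ (y,x)) else 0)" .
    qed
    also have "\<dots> = K k $$ (y,x) * cnj (K k $$ (y,x))" using x by simp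
    finally show "(\<Sum>u<dA. \<Sum>v<dA. K k $$ (y,u) * exm dA x $$ (u,v) * cnj (K k $$ (y,v))) = K k $$ (y,x) * cnj (K k $$ (y,x))" .
  qed
  also have "\<dots> = complex_of_real (\<Sum>k<r. (cmod (K k $$ (y,x)))\<^sup>2)"
    by (simp only: of_real_sum complex_norm_square)
  finally show ?thesis .
qed

lemma channel_col_sum:
  assumes K: "\<forall>k < r. K k \<in> carrier_mat dB dA" and x: "x < dA"
    and id: "msum dA dA r (\<lambda>k. adj (K k) * K k) = 1\<^sub>m dA"
  shows "(\<Sum>y<dB. \<Sum>k<r. (cmod (K k $$ (y,x)))\<^sup>2) = 1"
proof -
  have "1 = msum dA dA r (\<lambda>k. adj (K k) * K k) $$ (x,x)" using id x by simp
  also have "\<dots> = (\<Sum>k<r. (adj (K k) * K k) $$ (x,x))" using x by (simp add: msum_index)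
  also have "\<dots> = (\<Sum>k<r. \<Sum>y<dB. cnj (K k $$ (y,x)) * K k $$ (y,x))"
  proof (rule sum.cong[OF refl])
    fix k assume "k \<in> {..<r}"
    then have c: "K k \<in> carrier_mat dB dA" using K by auto
    show "(adj (K k) * K k) $$ (x,x) = (\<Sum>y<dB. cnj (K k $$ (y,x)) * K k $$ (y,x))"
      using c x by (subst mult_index[of _ dA dB _ dA]) auto
  qed
  also have "\<dots> = (\<Sum>y<dB. \<Sum>k<r. K k $$ (y,x) * cnj (K k $$ (y,x)))"
    by (subst sum.swap) (simp add: mult.commute)
  also have "\<dots> = complex_of_real (\<Sum>y<dB. \<Sum>k<r. (cmod (K k $$ (y,x)))\<^sup>2)"
    by (simp only: of_real_sum complex_norm_square)
  finally have "1 = complex_of_real (\<Sum>y<dB. \<Sum>k<r. (cmod (K k $$ (y,x)))\<^sup>2)" .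
  then have "complex_of_real (\<Sum>y<dB. \<Sum>k<r. (cmod (K k $$ (y,x)))\<^sup>2) = 1" by (rule sym)
  then show ?thesis by (simp only: of_real_eq_1_iff)
qed

definition DP :: "nat \<Rightarrow> nat \<Rightarrow> (complex mat \<Rightarrow> complex mat) \<Rightarrow> complex mat \<Rightarrow> bool" where
  "DP n m E X \<longleftrightarrow> (\<forall>y<m. \<forall>y'<m. E X $$ (y,y') =
      (if y = y' then (\<Sum>x<n. X $$ (x,x) * E (exm n x) $$ (y,y)) else 0))"

lemma channel_P:
  assumes "channel n m E" "x < n"
  shows "(\<forall>y<m. E (exm n x) $$ (y,y) = complex_of_real (Re (E (exm n x) $$ (y,y))) \<and> Re (E (exm n x) $$ (y,y)) \<ge> 0)
     \<and> (\<Sum>y<m. Re (E (exm n x) $$ (y,y))) = 1"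
proof -
  obtain r K where K: "\<forall>k < r. K k \<in> carrier_mat m n"
    and id: "msum n n r (\<lambda>k. adj (K k) * K k) = 1\<^sub>m n"
    and E: "\<forall>X \<in> carrier_mat n n. E X = msum m m r (\<lambda>k. K k * X * adj (K k))"
    using assms(1) unfolding channel_def by blast
  have e: "E (exm n x) $$ (y,y) = complex_of_real (\<Sum>k<r. (cmod (K k $$ (y,x)))\<^sup>2)" if "y < m" for y
    using channel_exm[OF K assms(2) that] E by simp
  show ?thesis
    using e channel_col_sum[OF K assms(2) id] by (simp add: sum_nonneg)
qed

lemma hermitian_diag_real:
  assumes "adj X = X" "X \<in> carrier_mat n n" "x < n"
  shows "X $$ (x,x) = complex_of_real (Re (X $$ (x,x)))"
proof -
  have a: "adj X $$ (x,x) = X $$ (x,x)" using assms(1) by simp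
  have "adj X $$ (x,x) = cnj (X $$ (x,x))" using assms(2,3) by simp
  then have "cnj (X $$ (x,x)) = X $$ (x,x)" using a by simp
  then show ?thesis by (metis Reals_cnj_iff complex_is_Real_iff of_real_Re)
qed

lemma DP_diag_vec:
  assumes "channel n m E" "adj X = X" "X \<in> carrier_mat n n" "DP n m E X" "y < m"
  shows "diag_vec (E X) y = (\<Sum>x<n. diag_vec X x * Re (E (exm n x) $$ (y,y)))"
proof -
  have "E X $$ (y,y) = (\<Sum>x<n. X $$ (x,x) * E (exm n x) $$ (y,y))"
    using assms(4,5) unfolding DP_def by auto
  also have "\<dots> = (\<Sum>x<n. complex_of_real (diag_vec X x * Re (E (exm n x) $$ (y,y))))"
  proof (rule sum.cong[OF refl])
    fix x assume "x \<in> {..<n}"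
    then have x: "x < n" by simp
    have 1: "X $$ (x,x) = complex_of_real (Re (X $$ (x,x)))" using hermitian_diag_real assms x by blast
    have 2: "E (exm n x) $$ (y,y) = complex_of_real (Re (E (exm n x) $$ (y,y)))"
      using channel_P[OF assms(1) x] assms(5) by blast
    show "X $$ (x,x) * E (exm n x) $$ (y,y) = complex_of_real (diag_vec X x * Re (E (exm n x) $$ (y,y)))"
      by (subst 1, subst 2) (simp add: diag_vec_def)
  qed
  also have "\<dots> = complex_of_real (\<Sum>x<n. diag_vec X x * Re (E (exm n x) $$ (y,y)))"
    by (simp only: of_real_sum)
  finally show ?thesis unfolding diag_vec_def by (simp only: Re_complex_of_real)
qed

lemma rhs_from_DP:
  assumes ch: "channel n m E" and st: "is_state n \<rho>" and g: "adj G = G" "G \<in> carrier_mat n n"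
    and stE: "E \<rho> \<in> carrier_mat m m"
    and d1: "DP n m E \<rho>" and d2: "DP n m E G"
    and gg: "\<forall>y<m. diag_vec (E G) y = g' y"
  shows "diagonal_mat (E \<rho>) \<and> rel_maj n (diag_vec \<rho>) (diag_vec G) m (diag_vec (E \<rho>)) g'"
proof
  show "diagonal_mat (E \<rho>)" using d1 stE unfolding DP_def diagonal_mat_def by auto
  have sr: "adj \<rho> = \<rho>" "\<rho> \<in> carrier_mat n n" using st unfolding is_state_def psd_def by auto
  define P where "P i j = Re (E (exm n j) $$ (i,i))" for i j
  show "rel_maj n (diag_vec \<rho>) (diag_vec G) m (diag_vec (E \<rho>)) g'"
    unfolding rel_maj_def
  proof (intro exI[of _ P] conjI allI impI)
    fix i j assume "i < m" "j < n" then show "0 \<le> P i j" using channel_P[OF ch] unfolding P_def by blast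
  next
    fix j assume "j < n" then show "(\<Sum>i<m. P i j) = 1" using channel_P[OF ch] unfolding P_def by blast
  next
    fix i assume "i < m"
    then show "(\<Sum>j<n. P i j * diag_vec \<rho> j) = diag_vec (E \<rho>) i"
      using DP_diag_vec[OF ch sr(1) sr(2) d1] unfolding P_def by (simp add: mult.commute)
  next
    fix i assume "i < m"
    then show "(\<Sum>j<n. P i j * diag_vec G j) = g' i"
      using DP_diag_vec[OF ch g d2] gg unfolding P_def by (simp add: mult.commute)
  qed
qed


lemma diag_mult_left:
  assumes "X \<in> carrier_mat n m" "i < n" "j < m"
  shows "(mat n n (\<lambda>(i,j). if i = j then f i else 0) * X) $$ (i,j) = f i * X $$ (i,j)"
proof -
  have "(mat n n (\<lambda>(i,j). if i = j then f i else 0) * X) $$ (i,j)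
      = (\<Sum>u<n. (if i = u then f i else 0) * X $$ (u,j))"
    using assms by (subst mult_index[of _ n n _ m]) auto
  also have "\<dots> = (\<Sum>u<n. if u = i then f i * X $$ (i,j) else 0)"
    by (rule sum.cong) auto
  also have "\<dots> = f i * X $$ (i,j)" using assms by simp
  finally show ?thesis .
qed

lemma diag_mult_right:
  assumes "X \<in> carrier_mat m n" "i < m" "j < n"
  shows "(X * mat n n (\<lambda>(i,j). if i = j then f i else 0)) $$ (i,j) = X $$ (i,j) * f j"
proof -
  have "(X * mat n n (\<lambda>(i,j). if i = j then f i else 0)) $$ (i,j)
      = (\<Sum>u<n. X $$ (i,u) * (if u = j then f u else 0))"
    using assms by (subst mult_index[of _ m n _ n]) auto
  also have "\<dots> = (\<Sum>u<n. if u = j then X $$ (i,j) * f j else 0)"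
    by (rule sum.cong) auto
  also have "\<dots> = X $$ (i,j) * f j" using assms by simp
  finally show ?thesis .
qed

lemma adj_evol: "adj (evol a t) = mat (length a) (length a) (\<lambda>(i,j). if i = j then exp (\<i> * complex_of_real (a ! i * t)) else 0)"
  by (rule eq_matI) (auto simp: adj_def evol_def exp_cnj)

lemma evol_carrier[simp]: "evol a t \<in> carrier_mat (length a) (length a)"
  by (simp add: evol_def)

lemma conj_evol:
  assumes "X \<in> carrier_mat (length a) (length a)" "u < length a" "v < length a"
  shows "(evol a t * X * adj (evol a t)) $$ (u,v) = X $$ (u,v) * exp (- \<i> * complex_of_real ((a!u - a!v) * t))"
proof -
  let ?n = "length a"
  have c1: "evol a t * X \<in> carrier_mat ?n ?n" using assms by (auto intro!: mult_carrier_mat)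
  have "(evol a t * X * adj (evol a t)) $$ (u,v) = (evol a t * X) $$ (u,v) * exp (\<i> * complex_of_real (a ! v * t))"
    unfolding adj_evol by (rule diag_mult_right[OF c1 assms(2,3)])
  also have "(evol a t * X) $$ (u,v) = exp (- \<i> * complex_of_real (a ! u * t)) * X $$ (u,v)"
    unfolding evol_def by (rule diag_mult_left[OF assms])
  also have "exp (- \<i> * complex_of_real (a ! u * t)) * X $$ (u,v) * exp (\<i> * complex_of_real (a ! v * t))
     = X $$ (u,v) * (exp (- \<i> * complex_of_real (a ! u * t)) * exp (\<i> * complex_of_real (a ! v * t)))"
    by simp
  also have "exp (- \<i> * complex_of_real (a ! u * t)) * exp (\<i> * complex_of_real (a ! v * t))
     = exp (- \<i> * complex_of_real ((a!u - a!v) * t))"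
    by (simp add: exp_add[symmetric] algebra_simps)
  finally show ?thesis .
qed

lemma conj_evol_b:
  assumes "Y \<in> carrier_mat (length b) (length b)" "u < length b" "v < length b"
  shows "(evol b t * Y * adj (evol b t)) $$ (u,v) = Y $$ (u,v) * exp (- \<i> * complex_of_real ((b!u - b!v) * t))"
  using conj_evol[OF assms] .

lemma partition_pos: "valid_ham a \<Longrightarrow> partition_fn \<beta> a > 0"
  unfolding partition_fn_def valid_ham_def by (intro sum_pos) auto

lemma gibbs_carrier[simp]: "gibbs \<beta> a \<in> carrier_mat (length a) (length a)"
  by (simp add: gibbs_def)

lemma gibbs_dims[simp]: "dim_row (gibbs \<beta> a) = length a" "dim_col (gibbs \<beta> a) = length a"
  by (simp_all add: gibbs_def)

lemma gibbs_index: "i < length a \<Longrightarrow> j < length a \<Longrightarrow>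
  gibbs \<beta> a $$ (i,j) = (if i = j then complex_of_real (exp (- \<beta> * a ! i) / partition_fn \<beta> a) else 0)"
  by (simp add: gibbs_def)

lemma diag_vec_gibbs: "i < length a \<Longrightarrow> diag_vec (gibbs \<beta> a) i = exp (- \<beta> * a ! i) / partition_fn \<beta> a"
  by (simp add: diag_vec_def gibbs_index)

lemma gibbs_adj: "adj (gibbs \<beta> a) = gibbs \<beta> a"
  by (rule eq_matI) (auto simp: adj_def gibbs_def)

lemma gibbs_state:
  assumes "valid_ham a"
  shows "is_state (length a) (gibbs \<beta> a)"
proof -
  let ?n = "length a" and ?Z = "partition_fn \<beta> a"
  have Z: "?Z > 0" using partition_pos[OF assms] .
  have q: "0 \<le> Re (\<Sum>i<?n. \<Sum>j<?n. cnj (v i) * gibbs \<beta> a $$ (i,j) * v j)" for v :: "nat \<Rightarrow> complex"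
  proof -
    have "(\<Sum>i<?n. \<Sum>j<?n. cnj (v i) * gibbs \<beta> a $$ (i,j) * v j)
        = (\<Sum>i<?n. complex_of_real (exp (- \<beta> * a ! i) / ?Z * (cmod (v i))\<^sup>2))"
    proof (rule sum.cong[OF refl])
      fix i assume i: "i \<in> {..<?n}"
      have "(\<Sum>j<?n. cnj (v i) * gibbs \<beta> a $$ (i,j) * v j)
          = (\<Sum>j<?n. if j = i then cnj (v i) * complex_of_real (exp (- \<beta> * a ! i) / ?Z) * v i else 0)"
        by (rule sum.cong[OF refl]) (use i in \<open>auto simp: gibbs_index\<close>)
      also have "\<dots> = cnj (v i) * complex_of_real (exp (- \<beta> * a ! i) / ?Z) * v i" using i by simp
      also have "\<dots> = complex_of_real (exp (- \<beta> * a ! i) / ?Z) * (v i * cnj (v i))" by (simp add: algebra_simps)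
      also have "\<dots> = complex_of_real (exp (- \<beta> * a ! i) / ?Z * (cmod (v i))\<^sup>2)"
        by (simp only: complex_norm_square[symmetric] of_real_mult)
      finally show "(\<Sum>j<?n. cnj (v i) * gibbs \<beta> a $$ (i,j) * v j) = complex_of_real (exp (- \<beta> * a ! i) / ?Z * (cmod (v i))\<^sup>2)" .
    qed
    also have "Re \<dots> = (\<Sum>i<?n. exp (- \<beta> * a ! i) / ?Z * (cmod (v i))\<^sup>2)"
      by (simp only: Re_sum Re_complex_of_real)
    finally show ?thesis using Z by (simp add: sum_nonneg)
  qed
  have tr: "tr (gibbs \<beta> a) = 1"
  proof -
    have "tr (gibbs \<beta> a) = (\<Sum>i<?n. complex_of_real (exp (- \<beta> * a ! i) / ?Z))"
      unfolding tr_def by (simp add: gibbs_index)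
    also have "\<dots> = complex_of_real ((\<Sum>i<?n. exp (- \<beta> * a ! i)) / ?Z)"
      by (simp add: sum_divide_distrib)
    also have "\<dots> = 1" using Z by (simp add: partition_fn_def)
    finally show ?thesis .
  qed
  show ?thesis unfolding is_state_def psd_def using q tr gibbs_adj by auto
qed

lemma GPC_DP:
  assumes nd: "rel_nondeg a b" and ch: "channel (length a) (length b) E" and tc: "time_cov a b E"
    and st: "is_state (length a) X"
  shows "DP (length a) (length b) E X"
proof -
  let ?n = "length a" and ?m = "length b"
  obtain r K where K: "\<forall>k < r. K k \<in> carrier_mat ?m ?n"
    and E: "\<forall>X \<in> carrier_mat ?n ?n. E X = msum ?m ?m r (\<lambda>k. K k * X * adj (K k))"
    using ch unfolding channel_def by blast
  have Xc: "X \<in> carrier_mat ?n ?n" using st unfolding is_state_def psd_def by auto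
  have EXc: "E X \<in> carrier_mat ?m ?m" using E Xc by simp
  show ?thesis unfolding DP_def
  proof (intro allI impI)
    fix y y' assume y: "y < ?m" and y': "y' < ?m"
    define I where "I = {..<?n} \<times> {..<?n}"
    define c where "c = (\<lambda>(u,v). X $$ (u,v) * (\<Sum>k<r. K k $$ (y,u) * cnj (K k $$ (y',v))))"
    define \<theta> where "\<theta> = (\<lambda>(u,v). a!u - a!v)"
    have key: "(\<Sum>i\<in>I. c i * exp (- \<i> * complex_of_real (\<theta> i * t))) = E X $$ (y,y') * exp (- \<i> * complex_of_real ((b!y - b!y') * t))" for t
    proof -
      let ?U = "evol a t * X * adj (evol a t)"
      have Uc: "?U \<in> carrier_mat ?n ?n" using Xc by (auto intro!: mult_carrier_mat)
      have "E ?U $$ (y,y') = (\<Sum>k<r. \<Sum>u<?n. \<Sum>v<?n. K k $$ (y,u) * ?U $$ (u,v) * cnj (K k $$ (y',v)))"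
        using E Uc channel_formula[OF K Uc y y'] by simp
      also have "\<dots> = (\<Sum>k<r. \<Sum>u<?n. \<Sum>v<?n. K k $$ (y,u) * (X $$ (u,v) * exp (- \<i> * complex_of_real ((a!u - a!v) * t))) * cnj (K k $$ (y',v)))"
        by (intro sum.cong refl) (simp add: conj_evol[OF Xc])
      also have "\<dots> = (\<Sum>u<?n. \<Sum>v<?n. \<Sum>k<r. K k $$ (y,u) * (X $$ (u,v) * exp (- \<i> * complex_of_real ((a!u - a!v) * t))) * cnj (K k $$ (y',v)))"
        by (simp add: sum.swap[of _ "{..<r}"])
      also have "\<dots> = (\<Sum>u<?n. \<Sum>v<?n. c (u,v) * exp (- \<i> * complex_of_real (\<theta> (u,v) * t)))"
        unfolding c_def \<theta>_def by (simp add: sum_distrib_left sum_distrib_right algebra_simps)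
      also have "\<dots> = (\<Sum>i\<in>I. c i * exp (- \<i> * complex_of_real (\<theta> i * t)))"
        unfolding I_def by (simp add: sum.cartesian_product)
      finally have 1: "E ?U $$ (y,y') = (\<Sum>i\<in>I. c i * exp (- \<i> * complex_of_real (\<theta> i * t)))" .
      have "E ?U = evol b t * E X * adj (evol b t)" using tc st unfolding time_cov_def by blast
      then have "E ?U $$ (y,y') = E X $$ (y,y') * exp (- \<i> * complex_of_real ((b!y - b!y') * t))"
        using conj_evol_b[OF EXc y y'] by simp
      then show ?thesis using 1 by simp
    qed
    have F: "E X $$ (y,y') = (\<Sum>i\<in>{i\<in>I. \<theta> i = b!y - b!y'}. c i)"
      by (rule fourier_coeff) (use key I_def in auto)
    show "E X $$ (y,y') = (if y = y' then (\<Sum>x<?n. X $$ (x,x) * E (exm ?n x) $$ (y,y)) else 0)"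
    proof (cases "y = y'")
      case False
      have e: "{i\<in>I. \<theta> i = b!y - b!y'} = {}"
        using nd False y y' unfolding rel_nondeg_def I_def \<theta>_def by auto
      show ?thesis using F False by (simp only: e sum.empty if_False)
    next
      case True
      have S: "{i\<in>I. \<theta> i = b!y - b!y'} = (\<lambda>u. (u,u)) ` {..<?n}"
      proof (intro equalityI subsetI)
        fix p assume "p \<in> {i\<in>I. \<theta> i = b!y - b!y'}"
        then obtain u v where p: "p = (u,v)" "u < ?n" "v < ?n" "a!u - a!v = b!y - b!y"
          using True by (auto simp: I_def \<theta>_def)
        then have "u = v" using nd y unfolding rel_nondeg_def by blast
        then show "p \<in> (\<lambda>u. (u,u)) ` {..<?n}" using p by auto
      next
        fix p assume "p \<in> (\<lambda>u. (u,u)) ` {..<?n}"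
        then show "p \<in> {i\<in>I. \<theta> i = b!y - b!y'}" using True by (auto simp: I_def \<theta>_def)
      qed
      have "E X $$ (y,y') = (\<Sum>u<?n. c (u,u))"
        using F unfolding S by (simp add: sum.reindex inj_on_def)
      also have "\<dots> = (\<Sum>x<?n. X $$ (x,x) * E (exm ?n x) $$ (y,y))"
      proof (rule sum.cong[OF refl])
        fix x assume x: "x \<in> {..<?n}"
        have "E (exm ?n x) $$ (y,y) = complex_of_real (\<Sum>k<r. (cmod (K k $$ (y,x)))\<^sup>2)"
          using channel_exm[OF K _ y, of x] x E by simp
        also have "\<dots> = (\<Sum>k<r. K k $$ (y,x) * cnj (K k $$ (y,x)))"
          by (simp only: of_real_sum complex_norm_square)
        finally show "c (x,x) = X $$ (x,x) * E (exm ?n x) $$ (y,y)" using True unfolding c_def by simp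
      qed
      finally show ?thesis using True by simp
    qed
  qed
qed


lemma sum_single:
  assumes "u0 < (N::nat)" "\<And>u. u < N \<Longrightarrow> u \<noteq> u0 \<Longrightarrow> f u = 0"
  shows "(\<Sum>u<N. f u) = f u0"
proof -
  have "(\<Sum>u<N. f u) = f u0 + (\<Sum>u\<in>{..<N}-{u0}. f u)" using assms(1) by (simp add: sum.remove)
  also have "(\<Sum>u\<in>{..<N}-{u0}. f u) = 0" using assms(2) by (intro sum.neutral) auto
  finally show ?thesis by simp
qed

lemma divmod_lt: "y < m \<Longrightarrow> x < n \<Longrightarrow> y * n + x < m * (n::nat)"
proof -
  assume a: "y < m" "x < n"
  have "y * n + x < y * n + n" using a by simp
  also have "\<dots> = Suc y * n" by simp
  also have "\<dots> \<le> m * n" using a by (intro mult_le_mono1) simp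
  finally show ?thesis .
qed

lemma div_lt_of_lt_mult: "k < m * (n::nat) \<Longrightarrow> k div n < m"
  by (simp add: less_mult_imp_div_less)

lemma mod_lt_of_lt_mult: "k < m * (n::nat) \<Longrightarrow> k mod n < n"
  by (cases "n = 0") auto

lemma sum_divmod: "(\<Sum>k<m*n. f (k div n) (k mod n)) = (\<Sum>y<m. \<Sum>x<(n::nat). f y x)"
proof -
  have "(\<Sum>k<m*n. f (k div n) (k mod n)) = (\<Sum>p\<in>{..<m}\<times>{..<n}. f (fst p) (snd p))"
  proof (rule sum.reindex_bij_witness[where i="\<lambda>(y,x). y*n+x" and j="\<lambda>k. (k div n, k mod n)"])
    fix a assume "a \<in> {..<m*n}"
    then show "(case (a div n, a mod n) of (y, x) \<Rightarrow> y * n + x) = a" by simp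
    show "(a div n, a mod n) \<in> {..<m}\<times>{..<n}"
      using \<open>a \<in> {..<m*n}\<close> div_lt_of_lt_mult mod_lt_of_lt_mult by auto
    show "f (fst (a div n, a mod n)) (snd (a div n, a mod n)) = f (a div n) (a mod n)" by simp
  next
    fix b assume b: "b \<in> {..<m}\<times>{..<n}"
    then obtain y x where yx: "b = (y,x)" "y < m" "x < n" by auto
    show "(case (case b of (y, x) \<Rightarrow> y * n + x) of k \<Rightarrow> (k div n, k mod n)) = b"
      using yx by simp
    show "(case b of (y, x) \<Rightarrow> y * n + x) \<in> {..<m*n}" using yx divmod_lt by auto
  qed
  also have "\<dots> = (\<Sum>(y,x)\<in>{..<m}\<times>{..<n}. f y x)" by (rule sum.cong) auto
  also have "\<dots> = (\<Sum>y<m. \<Sum>x<n. f y x)" by (rule sum.cartesian_product[symmetric])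
  finally show ?thesis .
qed

lemma sandwich_index:
  assumes "A \<in> carrier_mat m n" "X \<in> carrier_mat n n" "i < m" "j < m"
  shows "(A * X * adj A) $$ (i,j) = (\<Sum>u<n. \<Sum>v<n. A $$ (i,u) * X $$ (u,v) * cnj (A $$ (j,v)))"
proof -
  have c2: "A * X \<in> carrier_mat m n" using assms by simp
  have "(A * X * adj A) $$ (i,j) = (\<Sum>v<n. (A * X) $$ (i,v) * adj A $$ (v,j))"
    by (rule mult_index[OF c2 adj_carrier[OF assms(1)] assms(3,4)])
  also have "\<dots> = (\<Sum>v<n. (A * X) $$ (i,v) * cnj (A $$ (j,v)))"
    using assms by (intro sum.cong refl) simp
  also have "\<dots> = (\<Sum>v<n. (\<Sum>u<n. A $$ (i,u) * X $$ (u,v)) * cnj (A $$ (j,v)))"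
    by (intro sum.cong refl, subst mult_index[OF assms(1) assms(2) assms(3)]) auto
  also have "\<dots> = (\<Sum>v<n. \<Sum>u<n. A $$ (i,u) * X $$ (u,v) * cnj (A $$ (j,v)))"
    by (simp add: sum_distrib_right)
  also have "\<dots> = (\<Sum>u<n. \<Sum>v<n. A $$ (i,u) * X $$ (u,v) * cnj (A $$ (j,v)))"
    by (rule sum.swap)
  finally show ?thesis .
qed

lemma kron_index:
  assumes "i < dim_row M * dim_row N" "j < dim_col M * dim_col N"
  shows "kron M N $$ (i,j) = M $$ (i div dim_row N, j div dim_col N) * N $$ (i mod dim_row N, j mod dim_col N)"
  using assms by (simp add: kron_def)

lemma kron_carrier[simp]: "M \<in> carrier_mat a b \<Longrightarrow> N \<in> carrier_mat c d \<Longrightarrow> kron M N \<in> carrier_mat (a*c) (b*d)"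
  by (auto simp: kron_def)

lemma ham_carrier[simp]: "ham a \<in> carrier_mat (length a) (length a)" by (simp add: ham_def)

lemma ham_comp_eq:
  "ham_comp a c = mat (length a * length c) (length a * length c)
     (\<lambda>(i,j). if i = j then complex_of_real (a ! (i div length c) + c ! (i mod length c)) else 0)"
proof (rule eq_matI)
  fix i j assume i: "i < dim_row (mat (length a * length c) (length a * length c)
     (\<lambda>(i,j). if i = j then complex_of_real (a ! (i div length c) + c ! (i mod length c)) else 0))"
    and j: "j < dim_col (mat (length a * length c) (length a * length c)
     (\<lambda>(i,j). if i = j then complex_of_real (a ! (i div length c) + c ! (i mod length c)) else 0))"
  let ?nc = "length c" and ?n = "length a"
  have i': "i < ?n * ?nc" and j': "j < ?n * ?nc" using i j by auto
  have d: "i div ?nc < ?n" "j div ?nc < ?n" "i mod ?nc < ?nc" "j mod ?nc < ?nc"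
    using i' j' div_lt_of_lt_mult mod_lt_of_lt_mult by auto
  have e: "i = j \<longleftrightarrow> i div ?nc = j div ?nc \<and> i mod ?nc = j mod ?nc"
    by (metis div_mult_mod_eq)
  have k1: "kron (ham a) (1\<^sub>m ?nc) $$ (i,j) = ham a $$ (i div ?nc, j div ?nc) * 1\<^sub>m ?nc $$ (i mod ?nc, j mod ?nc)"
    using i' j' by (simp add: kron_def ham_def)
  have k2: "kron (1\<^sub>m ?n) (ham c) $$ (i,j) = 1\<^sub>m ?n $$ (i div ?nc, j div ?nc) * ham c $$ (i mod ?nc, j mod ?nc)"
    using i' j' by (simp add: kron_def ham_def)
  have "ham_comp a c $$ (i,j) = kron (ham a) (1\<^sub>m ?nc) $$ (i,j) + kron (1\<^sub>m ?n) (ham c) $$ (i,j)"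
    unfolding ham_comp_def using i' j' by (simp add: kron_def ham_def)
  also have "\<dots> = (if i = j then complex_of_real (a ! (i div ?nc) + c ! (i mod ?nc)) else 0)"
    unfolding k1 k2 using d e by (auto simp: ham_def)
  finally show "ham_comp a c $$ (i,j) = mat (length a * length c) (length a * length c)
     (\<lambda>(i,j). if i = j then complex_of_real (a ! (i div length c) + c ! (i mod length c)) else 0) $$ (i,j)"
    using i' j' by simp
qed (auto simp: ham_comp_def kron_def ham_def)

lemma energy_cons:
  assumes W: "W \<in> carrier_mat N N" and N: "N = length a * length c" "N = length b * length d"
    and eq: "W * ham_comp a c = ham_comp b d * W" and i: "i < N" and p: "p < N"
    and nz: "W $$ (i,p) \<noteq> 0"
  shows "b ! (i div length d) + d ! (i mod length d) = a ! (p div length c) + c ! (p mod length c)"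
proof -
  have Wc1: "W \<in> carrier_mat N (length a * length c)" using W N by simp
  have Wc2: "W \<in> carrier_mat (length b * length d) N" using W N by simp
  have i2: "i < length b * length d" and p2: "p < length a * length c" using i p N by auto
  have 1: "(W * ham_comp a c) $$ (i,p) = W $$ (i,p) * complex_of_real (a ! (p div length c) + c ! (p mod length c))"
    unfolding ham_comp_eq by (rule diag_mult_right[OF Wc1 i p2])
  have 2: "(ham_comp b d * W) $$ (i,p) = complex_of_real (b ! (i div length d) + d ! (i mod length d)) * W $$ (i,p)"
    unfolding ham_comp_eq by (rule diag_mult_left[OF Wc2 i2 p])
  have "W $$ (i,p) * complex_of_real (a ! (p div length c) + c ! (p mod length c))
      = complex_of_real (b ! (i div length d) + d ! (i mod length d)) * W $$ (i,p)"
    using eq 1 2 by metis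
  then have "W $$ (i,p) * complex_of_real (b ! (i div length d) + d ! (i mod length d))
      = W $$ (i,p) * complex_of_real (a ! (p div length c) + c ! (p mod length c))"
    by (simp only: mult.commute)
  then have "complex_of_real (b ! (i div length d) + d ! (i mod length d))
      = complex_of_real (a ! (p div length c) + c ! (p mod length c))"
    using nz mult_cancel_left[of "W $$ (i,p)"] by blast
  then show ?thesis by (simp only: of_real_eq_iff)
qed

lemma thermal_formula:
  assumes nd: "rel_nondeg a b" and W: "W \<in> carrier_mat N N"
    and N: "N = length a * length c" "N = length b * length d"
    and eq: "W * ham_comp a c = ham_comp b d * W"
    and X: "X \<in> carrier_mat (length a) (length a)" and y: "y < length b" and y': "y' < length b"
  shows "ptrace2 (length b) (length d) (W * kron X (gibbs \<beta> c) * adj W) $$ (y,y') =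
    (if y = y' then (\<Sum>l<length d. \<Sum>p<N. X $$ (p div length c, p div length c) *
        (complex_of_real ((cmod (W $$ (y * length d + l, p)))\<^sup>2) * gibbs \<beta> c $$ (p mod length c, p mod length c))) else 0)"
proof -
  let ?la = "length a" and ?lb = "length b" and ?lc = "length c" and ?ld = "length d"
  let ?K = "kron X (gibbs \<beta> c)"
  have Kc: "?K \<in> carrier_mat N N" using X N by simp
  define tm where "tm l p q = W $$ (y * ?ld + l, p) * ?K $$ (p,q) * cnj (W $$ (y' * ?ld + l, q))" for l p q
  have Kidx: "?K $$ (p,q) = X $$ (p div ?lc, q div ?lc) * gibbs \<beta> c $$ (p mod ?lc, q mod ?lc)"
    if "p < N" "q < N" for p q
    using that X N by (subst kron_index) auto
  have pt: "ptrace2 ?lb ?ld (W * ?K * adj W) $$ (y,y') = (\<Sum>l<?ld. \<Sum>p<N. \<Sum>q<N. tm l p q)"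
  proof -
    have "ptrace2 ?lb ?ld (W * ?K * adj W) $$ (y,y') = (\<Sum>l<?ld. (W * ?K * adj W) $$ (y * ?ld + l, y' * ?ld + l))"
      using y y' by (simp add: ptrace2_def)
    also have "\<dots> = (\<Sum>l<?ld. \<Sum>p<N. \<Sum>q<N. tm l p q)"
    proof (rule sum.cong[OF refl])
      fix l assume "l \<in> {..<?ld}"
      then have l: "l < ?ld" by simp
      have i1: "y * ?ld + l < N" and i2: "y' * ?ld + l < N" using divmod_lt[OF y l] divmod_lt[OF y' l] N by auto
      show "(W * ?K * adj W) $$ (y * ?ld + l, y' * ?ld + l) = (\<Sum>p<N. \<Sum>q<N. tm l p q)"
        unfolding tm_def by (rule sandwich_index[OF W Kc i1 i2])
    qed
    finally show ?thesis .
  qed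
  have zero: "tm l p q = 0" if l: "l < ?ld" and p: "p < N" and q: "q < N" and ne: "p \<noteq> q \<or> y \<noteq> y'" for l p q
  proof (rule ccontr)
    assume nz: "tm l p q \<noteq> 0"
    have i1: "y * ?ld + l < N" and i2: "y' * ?ld + l < N" using divmod_lt[OF y l] divmod_lt[OF y' l] N by auto
    have w1: "W $$ (y * ?ld + l, p) \<noteq> 0" and w2: "W $$ (y' * ?ld + l, q) \<noteq> 0" and k: "?K $$ (p,q) \<noteq> 0"
      using nz unfolding tm_def by auto
    have pl: "p div ?lc < ?la" "q div ?lc < ?la" "p mod ?lc < ?lc" "q mod ?lc < ?lc"
      using p q N div_lt_of_lt_mult mod_lt_of_lt_mult by auto
    have "gibbs \<beta> c $$ (p mod ?lc, q mod ?lc) \<noteq> 0" using k Kidx[OF p q] by auto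
    then have m: "p mod ?lc = q mod ?lc" using pl by (auto simp: gibbs_index split: if_splits)
    have l0: "?ld > 0" using l by (cases d) auto
    have e1: "b ! y + d ! l = a ! (p div ?lc) + c ! (p mod ?lc)"
      using energy_cons[OF W N eq i1 p w1] l0 l by simp
    have e2: "b ! y' + d ! l = a ! (q div ?lc) + c ! (q mod ?lc)"
      using energy_cons[OF W N eq i2 q w2] l0 l by simp
    have "a ! (p div ?lc) - a ! (q div ?lc) = b ! y - b ! y'" using e1 e2 m by simp
    then have "p div ?lc = q div ?lc \<and> y = y'" using nd pl y y' unfolding rel_nondeg_def by blast
    then have "p = q \<and> y = y'" using m by (metis div_mult_mod_eq)
    then show False using ne by simp
  qed
  show ?thesis
  proof (cases "y = y'")
    case False
    have "(\<Sum>l<?ld. \<Sum>p<N. \<Sum>q<N. tm l p q) = 0"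
      using zero False by (intro sum.neutral ballI) auto
    then show ?thesis using pt False by simp
  next
    case True
    have "(\<Sum>l<?ld. \<Sum>p<N. \<Sum>q<N. tm l p q) = (\<Sum>l<?ld. \<Sum>p<N. X $$ (p div ?lc, p div ?lc) *
        (complex_of_real ((cmod (W $$ (y * ?ld + l, p)))\<^sup>2) * gibbs \<beta> c $$ (p mod ?lc, p mod ?lc)))"
    proof (intro sum.cong refl)
      fix l p assume l: "l \<in> {..<?ld}" and p: "p \<in> {..<N}"
      have "(\<Sum>q<N. tm l p q) = tm l p p"
        by (rule sum_single) (use p zero l in auto)
      also have "\<dots> = X $$ (p div ?lc, p div ?lc) *
        (complex_of_real ((cmod (W $$ (y * ?ld + l, p)))\<^sup>2) * gibbs \<beta> c $$ (p mod ?lc, p mod ?lc))"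
      proof -
        have "tm l p p = (W $$ (y * ?ld + l, p) * cnj (W $$ (y * ?ld + l, p))) * (X $$ (p div ?lc, p div ?lc) * gibbs \<beta> c $$ (p mod ?lc, p mod ?lc))"
          unfolding tm_def using Kidx p True by simp
        also have "W $$ (y * ?ld + l, p) * cnj (W $$ (y * ?ld + l, p)) = complex_of_real ((cmod (W $$ (y * ?ld + l, p)))\<^sup>2)"
          by (rule complex_norm_square[symmetric])
        finally show ?thesis by simp
      qed
      finally show "(\<Sum>q<N. tm l p q) = X $$ (p div ?lc, p div ?lc) *
        (complex_of_real ((cmod (W $$ (y * ?ld + l, p)))\<^sup>2) * gibbs \<beta> c $$ (p mod ?lc, p mod ?lc))" .
    qed
    then show ?thesis using pt True by simp
  qed
qed

lemma thermal_DP: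
  assumes nd: "rel_nondeg a b" and T: "thermal_op \<beta> a b T" and X: "X \<in> carrier_mat (length a) (length a)"
  shows "DP (length a) (length b) T X"
proof -
  let ?la = "length a" and ?lb = "length b"
  obtain c d W where cd: "valid_ham c" "valid_ham d"
    and N: "length a * length c = length b * length d"
    and U: "unitary (length a * length c) W"
    and eq: "W * ham_comp a c = ham_comp b d * W"
    and Tf: "\<forall>X \<in> carrier_mat (length a) (length a).
         T X = ptrace2 (length b) (length d) (W * kron X (gibbs \<beta> c) * adj W)"
    using T unfolding thermal_op_def by blast
  let ?N = "length a * length c" and ?lc = "length c" and ?ld = "length d"
  have W: "W \<in> carrier_mat ?N ?N" using U unfolding unitary_def by simp
  have N2: "?N = ?la * ?lc" "?N = ?lb * ?ld" using N by auto
  define w where "w y l p = complex_of_real ((cmod (W $$ (y * ?ld + l, p)))\<^sup>2) * gibbs \<beta> c $$ (p mod ?lc, p mod ?lc)" for y l p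
  have F: "T Y $$ (y,y') = (if y = y' then (\<Sum>l<?ld. \<Sum>p<?N. Y $$ (p div ?lc, p div ?lc) * w y l p) else 0)"
    if "Y \<in> carrier_mat ?la ?la" "y < ?lb" "y' < ?lb" for Y y y'
    using thermal_formula[OF nd W N2 eq that] Tf that unfolding w_def by simp
  show ?thesis unfolding DP_def
  proof (intro allI impI)
    fix y y' assume y: "y < ?lb" and y': "y' < ?lb"
    show "T X $$ (y,y') = (if y = y' then (\<Sum>x<?la. X $$ (x,x) * T (exm ?la x) $$ (y,y)) else 0)"
    proof (cases "y = y'")
      case False then show ?thesis using F[OF X y y'] by simp
    next
      case True
      have "(\<Sum>x<?la. X $$ (x,x) * T (exm ?la x) $$ (y,y))
          = (\<Sum>x<?la. X $$ (x,x) * (\<Sum>l<?ld. \<Sum>p<?N. exm ?la x $$ (p div ?lc, p div ?lc) * w y l p))"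
        using F[OF exm_carrier y y] by simp
      also have "\<dots> = (\<Sum>x<?la. \<Sum>l<?ld. \<Sum>p<?N. X $$ (x,x) * exm ?la x $$ (p div ?lc, p div ?lc) * w y l p)"
        by (simp add: sum_distrib_left mult.assoc)
      also have "\<dots> = (\<Sum>l<?ld. \<Sum>p<?N. \<Sum>x<?la. X $$ (x,x) * exm ?la x $$ (p div ?lc, p div ?lc) * w y l p)"
        by (simp add: sum.swap[of _ "{..<?la}"])
      also have "\<dots> = (\<Sum>l<?ld. \<Sum>p<?N. X $$ (p div ?lc, p div ?lc) * w y l p)"
      proof (intro sum.cong refl)
        fix l p assume "p \<in> {..<?N}"
        then have pd: "p div ?lc < ?la" using div_lt_of_lt_mult by auto
        have "(\<Sum>x<?la. X $$ (x,x) * exm ?la x $$ (p div ?lc, p div ?lc) * w y l p)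
            = X $$ (p div ?lc, p div ?lc) * exm ?la (p div ?lc) $$ (p div ?lc, p div ?lc) * w y l p"
          by (rule sum_single[OF pd]) (use pd in \<open>auto simp: exm_def\<close>)
        also have "\<dots> = X $$ (p div ?lc, p div ?lc) * w y l p" using pd by (simp add: exm_def)
        finally show "(\<Sum>x<?la. X $$ (x,x) * exm ?la x $$ (p div ?lc, p div ?lc) * w y l p) = X $$ (p div ?lc, p div ?lc) * w y l p" .
      qed
      finally show ?thesis using F[OF X y y'] True by simp
    qed
  qed
qed

lemma CTO_DP:
  assumes nd: "rel_nondeg a b" and E: "E \<in> CTO \<beta> a b" and X: "X \<in> carrier_mat (length a) (length a)"
  shows "DP (length a) (length b) E X"
proof -
  let ?la = "length a" and ?lb = "length b"
  obtain T where T: "\<forall>n. thermal_op \<beta> a b (T n)"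
    and conv: "\<forall>X \<in> carrier_mat ?la ?la. \<forall>i < ?lb. \<forall>j < ?lb. (\<lambda>n. T n X $$ (i,j)) \<longlonglongrightarrow> E X $$ (i,j)"
    using E unfolding CTO_def by blast
  show ?thesis unfolding DP_def
  proof (intro allI impI)
    fix y y' assume y: "y < ?lb" and y': "y' < ?lb"
    have eqn: "T n X $$ (y,y') = (if y = y' then (\<Sum>x<?la. X $$ (x,x) * T n (exm ?la x) $$ (y,y)) else 0)" for n
      using thermal_DP[OF nd T[rule_format, of n] X] y y' unfolding DP_def by blast
    have "(\<lambda>n. if y = y' then (\<Sum>x<?la. X $$ (x,x) * T n (exm ?la x) $$ (y,y)) else 0)
        \<longlonglongrightarrow> (if y = y' then (\<Sum>x<?la. X $$ (x,x) * E (exm ?la x) $$ (y,y)) else 0)"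
    proof (cases "y = y'")
      case True
      have "(\<lambda>n. \<Sum>x<?la. X $$ (x,x) * T n (exm ?la x) $$ (y,y)) \<longlonglongrightarrow> (\<Sum>x<?la. X $$ (x,x) * E (exm ?la x) $$ (y,y))"
        using conv y by (intro tendsto_sum tendsto_mult tendsto_const) auto
      then show ?thesis using True by simp
    qed simp
    moreover have "(\<lambda>n. T n X $$ (y,y')) \<longlonglongrightarrow> E X $$ (y,y')" using conv X y y' by blast
    ultimately show "E X $$ (y,y') = (if y = y' then (\<Sum>x<?la. X $$ (x,x) * E (exm ?la x) $$ (y,y)) else 0)"
      unfolding eqn using LIMSEQ_unique by blast
  qed
qed


definition clch :: "nat \<Rightarrow> nat \<Rightarrow> (nat \<Rightarrow> nat \<Rightarrow> real) \<Rightarrow> complex mat \<Rightarrow> complex mat" where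
  "clch n m P X = mat m m (\<lambda>(i,j). if i = j then (\<Sum>x<n. complex_of_real (P i x) * X $$ (x,x)) else 0)"

lemma clch_carrier[simp]: "clch n m P X \<in> carrier_mat m m" by (simp add: clch_def)

lemma clch_channel:
  assumes P0: "\<forall>i<m. \<forall>j<n. 0 \<le> P i j" and P1: "\<forall>j<n. (\<Sum>i<m. P i j) = 1"
  shows "channel n m (clch n m P)"
proof -
  define K where "K k = mat m n (\<lambda>(i,j). if i = k div n \<and> j = k mod n then complex_of_real (sqrt (P (k div n) (k mod n))) else 0)" for k
  have Kc: "\<forall>k < m*n. K k \<in> carrier_mat m n" by (simp add: K_def)
  have Ki: "K k $$ (i,u) = (if i = k div n \<and> u = k mod n then complex_of_real (sqrt (P (k div n) (k mod n))) else 0)"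
    if "i < m" "u < n" for k i u using that by (simp add: K_def)
  have sq: "cnj (complex_of_real (sqrt (P y x))) * complex_of_real (sqrt (P y x)) = complex_of_real (P y x)"
    if "y < m" "x < n" for y x
  proof -
    have "sqrt (P y x) * sqrt (P y x) = P y x" using P0 that by simp
    then show ?thesis by (metis complex_cnj_complex_of_real of_real_mult)
  qed
  have id: "msum n n (m*n) (\<lambda>k. adj (K k) * K k) = 1\<^sub>m n"
  proof (rule eq_matI)
    fix i j assume "i < dim_row (1\<^sub>m n :: complex mat)" "j < dim_col (1\<^sub>m n :: complex mat)"
    then have i: "i < n" and j: "j < n" by auto
    have "msum n n (m*n) (\<lambda>k. adj (K k) * K k) $$ (i,j) = (\<Sum>k<m*n. (adj (K k) * K k) $$ (i,j))"
      using i j by (simp add: msum_index)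
    also have "\<dots> = (\<Sum>k<m*n. (\<lambda>y x. if i = x \<and> j = x then complex_of_real (P y x) else 0) (k div n) (k mod n))"
    proof (rule sum.cong[OF refl])
      fix k assume "k \<in> {..<m*n}"
      then have k: "k div n < m" "k mod n < n" using div_lt_of_lt_mult mod_lt_of_lt_mult by auto
      have "(adj (K k) * K k) $$ (i,j) = (\<Sum>u<m. adj (K k) $$ (i,u) * K k $$ (u,j))"
        using i j Kc k by (intro mult_index[of _ n m _ n]) (auto simp: K_def)
      also have "\<dots> = (\<Sum>u<m. cnj (K k $$ (u,i)) * K k $$ (u,j))"
        using i j by (intro sum.cong refl) (simp add: K_def)
      also have "\<dots> = cnj (K k $$ (k div n,i)) * K k $$ (k div n,j)"
        by (rule sum_single[OF k(1)]) (use i j in \<open>auto simp: Ki\<close>)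
      also have "\<dots> = (if i = k mod n \<and> j = k mod n then complex_of_real (P (k div n) (k mod n)) else 0)"
        using i j k sq by (auto simp: Ki)
      finally show "(adj (K k) * K k) $$ (i,j) = (\<lambda>y x. if i = x \<and> j = x then complex_of_real (P y x) else 0) (k div n) (k mod n)"
        by simp
    qed
    also have "\<dots> = (\<Sum>y<m. \<Sum>x<n. if i = x \<and> j = x then complex_of_real (P y x) else 0)"
      by (rule sum_divmod)
    also have "\<dots> = (\<Sum>y<m. if i = j then complex_of_real (P y i) else 0)"
    proof (rule sum.cong[OF refl])
      fix y show "(\<Sum>x<n. if i = x \<and> j = x then complex_of_real (P y x) else 0) = (if i = j then complex_of_real (P y i) else 0)"
        by (subst sum_single[OF i]) auto
    qed
    also have "\<dots> = (if i = j then complex_of_real (\<Sum>y<m. P y i) else 0)" by simp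
    also have "\<dots> = 1\<^sub>m n $$ (i,j)" using P1 i j by simp
    finally show "msum n n (m*n) (\<lambda>k. adj (K k) * K k) $$ (i,j) = 1\<^sub>m n $$ (i,j)" .
  qed (auto simp: msum_def)
  have E: "clch n m P X = msum m m (m*n) (\<lambda>k. K k * X * adj (K k))" if X: "X \<in> carrier_mat n n" for X
  proof (rule eq_matI)
    fix i j assume "i < dim_row (msum m m (m*n) (\<lambda>k. K k * X * adj (K k)))" "j < dim_col (msum m m (m*n) (\<lambda>k. K k * X * adj (K k)))"
    then have i: "i < m" and j: "j < m" by (auto simp: msum_def)
    have "msum m m (m*n) (\<lambda>k. K k * X * adj (K k)) $$ (i,j) = (\<Sum>k<m*n. \<Sum>u<n. \<Sum>v<n. K k $$ (i,u) * X $$ (u,v) * cnj (K k $$ (j,v)))"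
      by (rule channel_formula[OF Kc X i j])
    also have "\<dots> = (\<Sum>k<m*n. (\<lambda>y x. if i = y \<and> j = y then complex_of_real (P y x) * X $$ (x,x) else 0) (k div n) (k mod n))"
    proof (rule sum.cong[OF refl])
      fix k assume "k \<in> {..<m*n}"
      then have k: "k div n < m" "k mod n < n" using div_lt_of_lt_mult mod_lt_of_lt_mult by auto
      have "(\<Sum>u<n. \<Sum>v<n. K k $$ (i,u) * X $$ (u,v) * cnj (K k $$ (j,v)))
          = (\<Sum>v<n. K k $$ (i,k mod n) * X $$ (k mod n,v) * cnj (K k $$ (j,v)))"
        by (rule sum_single[OF k(2)]) (use i j in \<open>auto simp: Ki\<close>)
      also have "\<dots> = K k $$ (i,k mod n) * X $$ (k mod n,k mod n) * cnj (K k $$ (j,k mod n))"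
        by (rule sum_single[OF k(2)]) (use i j in \<open>auto simp: Ki\<close>)
      also have "\<dots> = (if i = k div n \<and> j = k div n then complex_of_real (P (k div n) (k mod n)) * X $$ (k mod n, k mod n) else 0)"
      proof (cases "i = k div n \<and> j = k div n")
        case True
        have "K k $$ (i,k mod n) * X $$ (k mod n,k mod n) * cnj (K k $$ (j,k mod n))
            = (cnj (complex_of_real (sqrt (P (k div n) (k mod n)))) * complex_of_real (sqrt (P (k div n) (k mod n)))) * X $$ (k mod n,k mod n)"
          using True i j k by (simp add: Ki)
        then show ?thesis using True sq[OF k] by simp
      qed (use i j k in \<open>auto simp: Ki\<close>)
      finally show "(\<Sum>u<n. \<Sum>v<n. K k $$ (i,u) * X $$ (u,v) * cnj (K k $$ (j,v))) =
         (\<lambda>y x. if i = y \<and> j = y then complex_of_real (P y x) * X $$ (x,x) else 0) (k div n) (k mod n)" by simp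
    qed
    also have "\<dots> = (\<Sum>y<m. \<Sum>x<n. if i = y \<and> j = y then complex_of_real (P y x) * X $$ (x,x) else 0)"
      by (rule sum_divmod)
    also have "\<dots> = (\<Sum>x<n. if i = j then complex_of_real (P i x) * X $$ (x,x) else 0)"
      by (cases "i = j"; subst sum_single[OF i]; auto)
    also have "\<dots> = clch n m P X $$ (i,j)" using i j by (simp add: clch_def)
    finally show "clch n m P X $$ (i,j) = msum m m (m*n) (\<lambda>k. K k * X * adj (K k)) $$ (i,j)" by simp
  qed (auto simp: msum_def clch_def)
  show ?thesis unfolding channel_def using Kc id E by blast
qed

lemma clch_time_cov:
  shows "time_cov a b (clch (length a) (length b) P)"
  unfolding time_cov_def
proof (intro allI impI)
  fix t :: real and \<rho> assume st: "is_state (length a) \<rho>"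
  let ?n = "length a" and ?m = "length b"
  have X: "\<rho> \<in> carrier_mat ?n ?n" using st unfolding is_state_def psd_def by auto
  show "clch ?n ?m P (evol a t * \<rho> * adj (evol a t)) = evol b t * clch ?n ?m P \<rho> * adj (evol b t)"
  proof (rule eq_matI)
    fix i j assume "i < dim_row (evol b t * clch ?n ?m P \<rho> * adj (evol b t))"
      "j < dim_col (evol b t * clch ?n ?m P \<rho> * adj (evol b t))"
    then have i: "i < ?m" and j: "j < ?m" by (auto simp: evol_def)
    have r: "(evol b t * clch ?n ?m P \<rho> * adj (evol b t)) $$ (i,j) = clch ?n ?m P \<rho> $$ (i,j) * exp (- \<i> * complex_of_real ((b!i - b!j) * t))"
      by (rule conj_evol_b[OF clch_carrier i j])
    have d: "(evol a t * \<rho> * adj (evol a t)) $$ (x,x) = \<rho> $$ (x,x)" if "x < ?n" for x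
      using conj_evol[OF X that that] by simp
    show "clch ?n ?m P (evol a t * \<rho> * adj (evol a t)) $$ (i,j) = (evol b t * clch ?n ?m P \<rho> * adj (evol b t)) $$ (i,j)"
      unfolding r using i j d by (simp add: clch_def)
  qed (auto simp: clch_def evol_def)
qed

lemma clch_eq:
  assumes X: "adj X = X" "X \<in> carrier_mat n n" and Y: "adj Y = Y" "Y \<in> carrier_mat m m" "diagonal_mat Y"
    and s: "\<forall>i<m. (\<Sum>x<n. P i x * diag_vec X x) = diag_vec Y i"
  shows "clch n m P X = Y"
proof (rule eq_matI)
  fix i j assume "i < dim_row Y" "j < dim_col Y"
  then have i: "i < m" and j: "j < m" using Y by auto
  show "clch n m P X $$ (i,j) = Y $$ (i,j)"
  proof (cases "i = j")
    case True
    have "clch n m P X $$ (i,j) = (\<Sum>x<n. complex_of_real (P i x) * X $$ (x,x))" using i j True by (simp add: clch_def)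
    also have "\<dots> = (\<Sum>x<n. complex_of_real (P i x * diag_vec X x))"
      by (intro sum.cong refl, subst hermitian_diag_real[OF X]) (auto simp: diag_vec_def)
    also have "\<dots> = complex_of_real (diag_vec Y i)" using s i by (simp only: of_real_sum[symmetric])
    also have "\<dots> = Y $$ (i,j)" using hermitian_diag_real[OF Y(1,2) i] True by (simp add: diag_vec_def)
    finally show ?thesis .
  next
    case False
    then show ?thesis using i j Y unfolding diagonal_mat_def by (simp add: clch_def)
  qed
qed (use Y in \<open>auto simp: clch_def\<close>)

lemma gibbs_diagonal: "diagonal_mat (gibbs \<beta> a)"
  unfolding diagonal_mat_def by (simp add: gibbs_index)


lemma card_fibers:
  assumes "finite S" "finite T" "g ` S \<subseteq> T"
  shows "card S = (\<Sum>y\<in>T. card {x\<in>S. g x = y})"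
proof -
  have "(\<Sum>y\<in>T. sum (\<lambda>_. 1::nat) {x. x \<in> S \<and> g x = y}) = sum (\<lambda>_. 1) S"
    by (rule sum.group[OF assms])
  then show ?thesis by simp
qed

lemma bij_betw_upd:
  assumes "bij_betw f A B" "a \<notin> A" "b \<notin> B"
  shows "bij_betw (f(a := b)) (insert a A) (insert b B)"
proof -
  have "bij_betw (f(a := b)) A B"
    using assms(1,2) by (subst bij_betw_cong[where g=f]) auto
  then have i: "inj_on (f(a := b)) A" and im: "(f(a := b)) ` A = B" by (auto simp: bij_betw_def)
  have "inj_on (f(a := b)) (insert a A)" using i im assms(2,3) by auto
  moreover have "(f(a := b)) ` (insert a A) = insert b B" by (simp only: image_insert fun_upd_same im)
  ultimately show ?thesis by (simp add: bij_betw_def)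
qed

lemma card_minus_one:
  assumes "finite A" "s \<in> A"
  shows "card {x\<in>A - {s}. P x} = (if P s then card {x\<in>A. P x} - 1 else card {x\<in>A. P x})"
proof -
  have "{x\<in>A - {s}. P x} = {x\<in>A. P x} - {s}" by auto
  then show ?thesis using assms by (auto simp: card_Diff_singleton_if)
qed

lemma exists_bij_counts:
  fixes S1 :: "'a set" and S2 :: "'b set" and \<kappa>1 :: "'a \<Rightarrow> 'k" and \<kappa>2 :: "'b \<Rightarrow> 'k"
    and xl :: "'a \<Rightarrow> 'x" and yl :: "'b \<Rightarrow> 'y" and F :: "'k \<Rightarrow> 'y \<Rightarrow> 'x \<Rightarrow> nat"
  assumes "finite S1" "finite S2" "finite Xs" "finite Ys"
    and "xl ` S1 \<subseteq> Xs" "yl ` S2 \<subseteq> Ys"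
    and "\<forall>q. card {s\<in>S1. \<kappa>1 s = q} = card {s\<in>S2. \<kappa>2 s = q}"
    and "\<forall>q. \<forall>x\<in>Xs. (\<Sum>y\<in>Ys. F q y x) \<le> card {s\<in>S1. \<kappa>1 s = q \<and> xl s = x}"
    and "\<forall>q. \<forall>y\<in>Ys. (\<Sum>x\<in>Xs. F q y x) \<le> card {s\<in>S2. \<kappa>2 s = q \<and> yl s = y}"
  shows "\<exists>\<sigma>. bij_betw \<sigma> S1 S2 \<and> (\<forall>s\<in>S1. \<kappa>2 (\<sigma> s) = \<kappa>1 s) \<and>
     (\<forall>q. \<forall>x\<in>Xs. \<forall>y\<in>Ys. F q y x \<le> card {s\<in>S1. \<kappa>1 s = q \<and> xl s = x \<and> yl (\<sigma> s) = y})"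
  using assms
proof (induction "card S1" arbitrary: S1 S2 F)
  case 0
  then have S1: "S1 = {}" by simp
  have S2: "S2 = {}"
  proof (rule ccontr)
    assume "S2 \<noteq> {}"
    then obtain t where t: "t \<in> S2" by blast
    have "card {s\<in>S2. \<kappa>2 s = \<kappa>2 t} > 0" using t 0 by (auto simp: card_gt_0_iff)
    moreover have "card {s\<in>S1. \<kappa>1 s = \<kappa>2 t} = 0" using S1 by simp
    ultimately show False using 0(8) by simp
  qed
  have F0: "F q y x = 0" if "x \<in> Xs" "y \<in> Ys" for q y x
  proof -
    have "(\<Sum>y\<in>Ys. F q y x) \<le> 0" using 0(9) that S1 by force
    then have "(\<Sum>y\<in>Ys. F q y x) = 0" by simp
    then show ?thesis using 0(5) that by (simp add: sum_eq_0_iff)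
  qed
  show ?case using S1 S2 F0 by (intro exI[of _ "\<lambda>_. undefined"]) (auto simp: bij_betw_def)
next
  case (Suc k S1 S2 F)
  note fin1 = Suc.prems(1) and fin2 = Suc.prems(2) and finX = Suc.prems(3) and finY = Suc.prems(4)
  note xlS = Suc.prems(5) and ylS = Suc.prems(6) and cls = Suc.prems(7)
  note rowc = Suc.prems(8) and colc = Suc.prems(9)
  obtain s0 where s0: "s0 \<in> S1" using Suc.hyps(2) by (metis card.empty ex_in_conv nat.distinct(1))
  define q0 where "q0 = \<kappa>1 s0"
  define x0 where "x0 = xl s0"
  have x0X: "x0 \<in> Xs" using xlS s0 x0_def by auto
  let ?I = "\<lambda>q x. card {s\<in>S1. \<kappa>1 s = q \<and> xl s = x}"
  let ?O = "\<lambda>q y. card {s\<in>S2. \<kappa>2 s = q \<and> yl s = y}"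
  have I0: "?I q0 x0 \<ge> 1"
  proof -
    have "{s\<in>S1. \<kappa>1 s = q0 \<and> xl s = x0} \<noteq> {}" using s0 q0_def x0_def by auto
    then show ?thesis using fin1 by (simp add: Suc_le_eq card_gt_0_iff)
  qed
  have "\<exists>t0 F'. t0 \<in> S2 \<and> \<kappa>2 t0 = q0 \<and>
      (\<forall>q y x. F' q y x \<le> F q y x) \<and>
      (\<forall>q y x. F q y x \<le> F' q y x + (if (q, y, x) = (q0, yl t0, x0) then 1 else 0)) \<and>
      (\<Sum>y\<in>Ys. F' q0 y x0) \<le> ?I q0 x0 - 1 \<and>
      (\<Sum>x\<in>Xs. F' q0 (yl t0) x) \<le> ?O q0 (yl t0) - 1"
  proof (cases "\<exists>y0\<in>Ys. F q0 y0 x0 > 0")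
    case True
    then obtain y0 where y0: "y0 \<in> Ys" "F q0 y0 x0 > 0" by blast
    have "F q0 y0 x0 \<le> (\<Sum>x\<in>Xs. F q0 y0 x)" using finX x0X by (intro member_le_sum) auto
    also have "\<dots> \<le> ?O q0 y0" using colc y0 by blast
    finally have "?O q0 y0 > 0" using y0 by simp
    then obtain t0 where t0: "t0 \<in> S2" "\<kappa>2 t0 = q0" "yl t0 = y0"
      by (metis (mono_tags, lifting) card.empty empty_Collect_eq less_irrefl)
    define F' where "F' q y x = (if (q, y, x) = (q0, y0, x0) then F q y x - 1 else F q y x)" for q y x
    have sF: "(\<Sum>y\<in>Ys. F' q0 y x0) = (\<Sum>y\<in>Ys. F q0 y x0) - 1"
    proof -
      have "(\<Sum>y\<in>Ys. F q0 y x0) = F q0 y0 x0 + (\<Sum>y\<in>Ys - {y0}. F q0 y x0)"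
        using finY y0 by (simp add: sum.remove)
      moreover have "(\<Sum>y\<in>Ys. F' q0 y x0) = F' q0 y0 x0 + (\<Sum>y\<in>Ys - {y0}. F' q0 y x0)"
        using finY y0 by (simp add: sum.remove)
      moreover have "(\<Sum>y\<in>Ys - {y0}. F' q0 y x0) = (\<Sum>y\<in>Ys - {y0}. F q0 y x0)"
        by (rule sum.cong) (auto simp: F'_def)
      ultimately show ?thesis using y0 by (simp add: F'_def)
    qed
    have sG: "(\<Sum>x\<in>Xs. F' q0 y0 x) = (\<Sum>x\<in>Xs. F q0 y0 x) - 1"
    proof -
      have "(\<Sum>x\<in>Xs. F q0 y0 x) = F q0 y0 x0 + (\<Sum>x\<in>Xs - {x0}. F q0 y0 x)"
        using finX x0X by (simp add: sum.remove)
      moreover have "(\<Sum>x\<in>Xs. F' q0 y0 x) = F' q0 y0 x0 + (\<Sum>x\<in>Xs - {x0}. F' q0 y0 x)"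
        using finX x0X by (simp add: sum.remove)
      moreover have "(\<Sum>x\<in>Xs - {x0}. F' q0 y0 x) = (\<Sum>x\<in>Xs - {x0}. F q0 y0 x)"
        by (rule sum.cong) (auto simp: F'_def)
      ultimately show ?thesis using y0 by (simp add: F'_def)
    qed
    have r1: "(\<Sum>y\<in>Ys. F' q0 y x0) \<le> ?I q0 x0 - 1" using sF rowc x0X by (metis diff_le_mono)
    have c1: "(\<Sum>x\<in>Xs. F' q0 y0 x) \<le> ?O q0 y0 - 1" using sG colc y0 by (metis diff_le_mono)
    show ?thesis
      by (rule exI[of _ t0], rule exI[of _ F']) (use t0 r1 c1 in \<open>auto simp: F'_def\<close>)
  next
    case False
    then have zero: "\<forall>y\<in>Ys. F q0 y x0 = 0" by auto
    have sumI: "card {s\<in>S1. \<kappa>1 s = q0} = (\<Sum>x\<in>Xs. ?I q0 x)"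
    proof -
      have "card {s\<in>S1. \<kappa>1 s = q0} = (\<Sum>x\<in>Xs. card {s\<in>{s\<in>S1. \<kappa>1 s = q0}. xl s = x})"
        by (rule card_fibers) (use fin1 finX xlS in auto)
      moreover have e: "\<And>x. {s\<in>{s\<in>S1. \<kappa>1 s = q0}. xl s = x} = {s\<in>S1. \<kappa>1 s = q0 \<and> xl s = x}" by auto
      ultimately show ?thesis by (simp only: e)
    qed
    have sumO: "card {s\<in>S2. \<kappa>2 s = q0} = (\<Sum>y\<in>Ys. ?O q0 y)"
    proof -
      have "card {s\<in>S2. \<kappa>2 s = q0} = (\<Sum>y\<in>Ys. card {s\<in>{s\<in>S2. \<kappa>2 s = q0}. yl s = y})"
        by (rule card_fibers) (use fin2 finY ylS in auto)
      moreover have e: "\<And>y. {s\<in>{s\<in>S2. \<kappa>2 s = q0}. yl s = y} = {s\<in>S2. \<kappa>2 s = q0 \<and> yl s = y}" by auto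
      ultimately show ?thesis by (simp only: e)
    qed
    have "(\<Sum>y\<in>Ys. \<Sum>x\<in>Xs. F q0 y x) = (\<Sum>x\<in>Xs. \<Sum>y\<in>Ys. F q0 y x)" by (rule sum.swap)
    also have "\<dots> \<le> (\<Sum>x\<in>Xs. if x = x0 then 0 else ?I q0 x)"
    proof (rule sum_mono)
      fix x assume x: "x \<in> Xs"
      show "(\<Sum>y\<in>Ys. F q0 y x) \<le> (if x = x0 then 0 else ?I q0 x)"
        using zero rowc x by auto
    qed
    also have "\<dots> < (\<Sum>x\<in>Xs. ?I q0 x)"
    proof -
      have "(\<Sum>x\<in>Xs. if x = x0 then 0 else ?I q0 x) = (\<Sum>x\<in>Xs - {x0}. ?I q0 x)"
      proof -
        have "(\<Sum>x\<in>Xs. if x = x0 then 0 else ?I q0 x) = (if x0 = x0 then 0 else ?I q0 x0) + (\<Sum>x\<in>Xs - {x0}. if x = x0 then 0 else ?I q0 x)"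
          using finX x0X by (simp only: sum.remove)
        also have "(\<Sum>x\<in>Xs - {x0}. if x = x0 then 0 else ?I q0 x) = (\<Sum>x\<in>Xs - {x0}. ?I q0 x)"
          by (rule sum.cong) auto
        finally show ?thesis by simp
      qed
      also have "\<dots> < ?I q0 x0 + (\<Sum>x\<in>Xs - {x0}. ?I q0 x)" using I0 by simp
      also have "\<dots> = (\<Sum>x\<in>Xs. ?I q0 x)" using finX x0X by (simp add: sum.remove)
      finally show ?thesis .
    qed
    also have "\<dots> = (\<Sum>y\<in>Ys. ?O q0 y)" using sumI sumO cls by simp
    finally have lt: "(\<Sum>y\<in>Ys. \<Sum>x\<in>Xs. F q0 y x) < (\<Sum>y\<in>Ys. ?O q0 y)" .
    obtain y1 where y1: "y1 \<in> Ys" "(\<Sum>x\<in>Xs. F q0 y1 x) < ?O q0 y1"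
    proof (rule ccontr)
      assume "\<not> thesis"
      then have "\<forall>y\<in>Ys. ?O q0 y \<le> (\<Sum>x\<in>Xs. F q0 y x)" using that by force
      then have "(\<Sum>y\<in>Ys. ?O q0 y) \<le> (\<Sum>y\<in>Ys. \<Sum>x\<in>Xs. F q0 y x)" by (intro sum_mono) auto
      then show False using lt by simp
    qed
    then have "?O q0 y1 > 0" by simp
    then obtain t0 where t0: "t0 \<in> S2" "\<kappa>2 t0 = q0" "yl t0 = y1"
      by (metis (mono_tags, lifting) card.empty empty_Collect_eq less_irrefl)
    show ?thesis
      by (rule exI[of _ t0], rule exI[of _ F]) (use t0 zero y1 in auto)
  qed
  then obtain t0 F' where t0: "t0 \<in> S2" "\<kappa>2 t0 = q0"
    and F'le: "\<forall>q y x. F' q y x \<le> F q y x"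
    and F'ge: "\<forall>q y x. F q y x \<le> F' q y x + (if (q, y, x) = (q0, yl t0, x0) then 1 else 0)"
    and row0: "(\<Sum>y\<in>Ys. F' q0 y x0) \<le> ?I q0 x0 - 1"
    and col0: "(\<Sum>x\<in>Xs. F' q0 (yl t0) x) \<le> ?O q0 (yl t0) - 1"
    by blast
  define S1' where "S1' = S1 - {s0}"
  define S2' where "S2' = S2 - {t0}"
  have cS1': "k = card S1'" using Suc.hyps(2) s0 fin1 unfolding S1'_def by simp
  have IH: "\<exists>\<sigma>. bij_betw \<sigma> S1' S2' \<and> (\<forall>s\<in>S1'. \<kappa>2 (\<sigma> s) = \<kappa>1 s) \<and>
     (\<forall>q. \<forall>x\<in>Xs. \<forall>y\<in>Ys. F' q y x \<le> card {s\<in>S1'. \<kappa>1 s = q \<and> xl s = x \<and> yl (\<sigma> s) = y})"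
  proof (rule Suc.hyps(1)[OF cS1'])
    show "finite S1'" "finite S2'" using fin1 fin2 by (auto simp: S1'_def S2'_def)
    show "finite Xs" "finite Ys" by fact+
    show "xl ` S1' \<subseteq> Xs" "yl ` S2' \<subseteq> Ys" using xlS ylS by (auto simp: S1'_def S2'_def)
    show "\<forall>q. card {s\<in>S1'. \<kappa>1 s = q} = card {s\<in>S2'. \<kappa>2 s = q}"
    proof
      fix q
      have 1: "card {s\<in>S1'. \<kappa>1 s = q} = (if \<kappa>1 s0 = q then card {s\<in>S1. \<kappa>1 s = q} - 1 else card {s\<in>S1. \<kappa>1 s = q})"
        unfolding S1'_def by (rule card_minus_one[OF fin1 s0])
      have 2: "card {s\<in>S2'. \<kappa>2 s = q} = (if \<kappa>2 t0 = q then card {s\<in>S2. \<kappa>2 s = q} - 1 else card {s\<in>S2. \<kappa>2 s = q})"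
        unfolding S2'_def by (rule card_minus_one[OF fin2 t0(1)])
      show "card {s\<in>S1'. \<kappa>1 s = q} = card {s\<in>S2'. \<kappa>2 s = q}"
        unfolding 1 2 using cls t0(2) q0_def by simp
    qed
    show "\<forall>q. \<forall>x\<in>Xs. (\<Sum>y\<in>Ys. F' q y x) \<le> card {s\<in>S1'. \<kappa>1 s = q \<and> xl s = x}"
    proof (intro allI ballI)
      fix q x assume x: "x \<in> Xs"
      show "(\<Sum>y\<in>Ys. F' q y x) \<le> card {s\<in>S1'. \<kappa>1 s = q \<and> xl s = x}"
      proof (cases "q = q0 \<and> x = x0")
        case True
        have 1: "card {s\<in>S1'. \<kappa>1 s = q \<and> xl s = x} = (if \<kappa>1 s0 = q \<and> xl s0 = x then ?I q x - 1 else ?I q x)"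
          unfolding S1'_def by (rule card_minus_one[OF fin1 s0])
        show ?thesis unfolding 1 using row0 True q0_def x0_def by simp
      next
        case False
        have "(\<Sum>y\<in>Ys. F' q y x) \<le> (\<Sum>y\<in>Ys. F q y x)" using F'le by (intro sum_mono) auto
        also have "\<dots> \<le> ?I q x" using rowc x by blast
        also have "\<dots> = card {s\<in>S1'. \<kappa>1 s = q \<and> xl s = x}"
        proof -
          have 1: "card {s\<in>S1'. \<kappa>1 s = q \<and> xl s = x} = (if \<kappa>1 s0 = q \<and> xl s0 = x then ?I q x - 1 else ?I q x)"
            unfolding S1'_def by (rule card_minus_one[OF fin1 s0])
          show ?thesis unfolding 1 using False q0_def x0_def by auto
        qed
        finally show ?thesis .
      qed
    qed
    show "\<forall>q. \<forall>y\<in>Ys. (\<Sum>x\<in>Xs. F' q y x) \<le> card {s\<in>S2'. \<kappa>2 s = q \<and> yl s = y}"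
    proof (intro allI ballI)
      fix q y assume y: "y \<in> Ys"
      show "(\<Sum>x\<in>Xs. F' q y x) \<le> card {s\<in>S2'. \<kappa>2 s = q \<and> yl s = y}"
      proof (cases "q = q0 \<and> y = yl t0")
        case True
        have 1: "card {s\<in>S2'. \<kappa>2 s = q \<and> yl s = y} = (if \<kappa>2 t0 = q \<and> yl t0 = y then ?O q y - 1 else ?O q y)"
          unfolding S2'_def by (rule card_minus_one[OF fin2 t0(1)])
        show ?thesis unfolding 1 using col0 True t0(2) by simp
      next
        case False
        have "(\<Sum>x\<in>Xs. F' q y x) \<le> (\<Sum>x\<in>Xs. F q y x)" using F'le by (intro sum_mono) auto
        also have "\<dots> \<le> ?O q y" using colc y by blast
        also have "\<dots> = card {s\<in>S2'. \<kappa>2 s = q \<and> yl s = y}"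
        proof -
          have 1: "card {s\<in>S2'. \<kappa>2 s = q \<and> yl s = y} = (if \<kappa>2 t0 = q \<and> yl t0 = y then ?O q y - 1 else ?O q y)"
            unfolding S2'_def by (rule card_minus_one[OF fin2 t0(1)])
          show ?thesis unfolding 1 using False t0(2) by auto
        qed
        finally show ?thesis .
      qed
    qed
  qed
  then obtain \<sigma>' where bij': "bij_betw \<sigma>' S1' S2'" and key': "\<forall>s\<in>S1'. \<kappa>2 (\<sigma>' s) = \<kappa>1 s"
    and cnt': "\<forall>q. \<forall>x\<in>Xs. \<forall>y\<in>Ys. F' q y x \<le> card {s\<in>S1'. \<kappa>1 s = q \<and> xl s = x \<and> yl (\<sigma>' s) = y}"
    by blast
  define \<sigma> where "\<sigma> = \<sigma>'(s0 := t0)"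
  have s0n: "s0 \<notin> S1'" and t0n: "t0 \<notin> S2'" by (auto simp: S1'_def S2'_def)
  have S1eq: "S1 = insert s0 S1'" and S2eq: "S2 = insert t0 S2'" using s0 t0 by (auto simp: S1'_def S2'_def)
  have bij: "bij_betw \<sigma> S1 S2" unfolding \<sigma>_def S1eq S2eq by (rule bij_betw_upd[OF bij' s0n t0n])
  have key: "\<forall>s\<in>S1. \<kappa>2 (\<sigma> s) = \<kappa>1 s" using key' t0 q0_def unfolding \<sigma>_def S1eq by auto
  have cnt: "F q y x \<le> card {s\<in>S1. \<kappa>1 s = q \<and> xl s = x \<and> yl (\<sigma> s) = y}" if x: "x \<in> Xs" and y: "y \<in> Ys" for q x y
  proof -
    let ?A' = "{s\<in>S1'. \<kappa>1 s = q \<and> xl s = x \<and> yl (\<sigma>' s) = y}"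
    let ?A = "{s\<in>S1. \<kappa>1 s = q \<and> xl s = x \<and> yl (\<sigma> s) = y}"
    have sub: "?A' \<subseteq> ?A" using s0n unfolding \<sigma>_def S1eq by auto
    have finA: "finite ?A" using fin1 by simp
    show ?thesis
    proof (cases "(q, y, x) = (q0, yl t0, x0)")
      case True
      have "s0 \<in> ?A" using True s0 q0_def x0_def unfolding \<sigma>_def by auto
      moreover have "s0 \<notin> ?A'" using s0n by simp
      ultimately have "insert s0 ?A' \<subseteq> ?A" using sub by blast
      then have "card (insert s0 ?A') \<le> card ?A" using finA by (intro card_mono) auto
      moreover have "finite ?A'" using fin1 unfolding S1'_def by simp
      ultimately have "card ?A' + 1 \<le> card ?A" using \<open>s0 \<notin> ?A'\<close> by simp
      moreover have "F q y x \<le> F' q y x + 1" using F'ge[rule_format, of q y x] True by simp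
      moreover have "F' q y x \<le> card ?A'" using cnt' x y by blast
      ultimately show ?thesis by linarith
    next
      case False
      have "F q y x \<le> F' q y x" using F'ge[rule_format, of q y x] False by (auto split: if_splits)
      also have "\<dots> \<le> card ?A'" using cnt' x y by blast
      also have "\<dots> \<le> card ?A" using sub finA by (intro card_mono) auto
      finally show ?thesis .
    qed
  qed
  show ?case using bij key cnt by blast
qed


lemma perm_thermal:
  assumes nd: "rel_nondeg a b" and vc: "valid_ham c" and vd: "valid_ham d"
    and N: "length a * length c = length b * length d"
    and bij: "bij_betw \<pi> {..<length a * length c} {..<length a * length c}"
    and en: "\<forall>p < length a * length c. b ! (\<pi> p div length d) + d ! (\<pi> p mod length d) = a ! (p div length c) + c ! (p mod length c)"
  shows "\<exists>T. thermal_op \<beta> a b T \<and> (\<forall>x < length a. \<forall>y < length b.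
     T (exm (length a) x) $$ (y,y) = complex_of_real (\<Sum>p < length a * length c.
        if p div length c = x \<and> \<pi> p div length d = y then exp (- \<beta> * c ! (p mod length c)) / partition_fn \<beta> c else 0))"
proof -
  let ?la = "length a" and ?lb = "length b" and ?lc = "length c" and ?ld = "length d"
  let ?N = "?la * ?lc"
  have N2: "?N = ?la * ?lc" "?N = ?lb * ?ld" using N by auto
  define W :: "complex mat" where "W = mat ?N ?N (\<lambda>(i,p). if i = \<pi> p then 1 else 0)"
  have Wc: "W \<in> carrier_mat ?N ?N" by (simp add: W_def)
  have Wi: "W $$ (i,p) = (if i = \<pi> p then 1 else 0)" if "i < ?N" "p < ?N" for i p
    using that by (simp add: W_def)
  have pin: "\<pi> p < ?N" if "p < ?N" for p using bij that by (auto simp: bij_betw_def)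
  have inj: "inj_on \<pi> {..<?N}" using bij by (simp add: bij_betw_def)
  have surj: "\<exists>p<?N. \<pi> p = i" if "i < ?N" for i
  proof -
    have "i \<in> \<pi> ` {..<?N}" using bij that by (simp add: bij_betw_def)
    then show ?thesis by auto
  qed
  define T where "T X = ptrace2 ?lb ?ld (W * kron X (gibbs \<beta> c) * adj W)" for X
  have U: "unitary ?N W"
  proof -
    have 1: "adj W * W = 1\<^sub>m ?N"
    proof (rule eq_matI)
      fix p p' assume "p < dim_row (1\<^sub>m ?N :: complex mat)" "p' < dim_col (1\<^sub>m ?N :: complex mat)"
      then have p: "p < ?N" and p': "p' < ?N" by auto
      have "(adj W * W) $$ (p,p') = (\<Sum>i<?N. adj W $$ (p,i) * W $$ (i,p'))"
        using Wc p p' by (intro mult_index[of _ ?N ?N _ ?N]) auto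
      also have "\<dots> = (\<Sum>i<?N. if i = \<pi> p then (if \<pi> p = \<pi> p' then 1 else 0) else 0)"
        using Wc p p' by (intro sum.cong refl) (auto simp: Wi)
      also have "\<dots> = (if \<pi> p = \<pi> p' then 1 else 0)" using pin[OF p] by simp
      also have "\<dots> = 1\<^sub>m ?N $$ (p,p')" using inj p p' by (auto simp: inj_on_def)
      finally show "(adj W * W) $$ (p,p') = 1\<^sub>m ?N $$ (p,p')" .
    qed (use Wc in auto)
    have 2: "W * adj W = 1\<^sub>m ?N"
    proof (rule eq_matI)
      fix i i' assume "i < dim_row (1\<^sub>m ?N :: complex mat)" "i' < dim_col (1\<^sub>m ?N :: complex mat)"
      then have i: "i < ?N" and i': "i' < ?N" by auto
      obtain p where p: "p < ?N" "\<pi> p = i" using surj[OF i] by blast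
      have "(W * adj W) $$ (i,i') = (\<Sum>q<?N. W $$ (i,q) * adj W $$ (q,i'))"
        using Wc i i' by (intro mult_index[of _ ?N ?N _ ?N]) auto
      also have "\<dots> = (\<Sum>q<?N. if q = p then (if i = i' then 1 else 0) else 0)"
      proof (intro sum.cong refl)
        fix q assume q: "q \<in> {..<?N}"
        have "\<pi> q = i \<longleftrightarrow> q = p" using inj p q by (auto simp: inj_on_def)
        then show "W $$ (i,q) * adj W $$ (q,i') = (if q = p then (if i = i' then 1 else 0) else 0)"
          using Wc i i' q p by (auto simp: Wi)
      qed
      also have "\<dots> = (if i = i' then 1 else 0)" using p by simp
      also have "\<dots> = 1\<^sub>m ?N $$ (i,i')" using i i' by simp
      finally show "(W * adj W) $$ (i,i') = 1\<^sub>m ?N $$ (i,i')" .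
    qed (use Wc in auto)
    show ?thesis unfolding unitary_def using Wc 1 2 by simp
  qed
  have E: "W * ham_comp a c = ham_comp b d * W"
  proof (rule eq_matI)
    fix i p assume "i < dim_row (ham_comp b d * W)" "p < dim_col (ham_comp b d * W)"
    then have i: "i < ?N" and p: "p < ?N" using Wc N by (auto simp: ham_comp_eq)
    have Wc2: "W \<in> carrier_mat (?lb * ?ld) ?N" using Wc N by simp
    have i2: "i < ?lb * ?ld" using i N by simp
    have 1: "(W * ham_comp a c) $$ (i,p) = W $$ (i,p) * complex_of_real (a ! (p div ?lc) + c ! (p mod ?lc))"
      unfolding ham_comp_eq by (rule diag_mult_right[OF Wc i p])
    have 2: "(ham_comp b d * W) $$ (i,p) = complex_of_real (b ! (i div ?ld) + d ! (i mod ?ld)) * W $$ (i,p)"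
      unfolding ham_comp_eq by (rule diag_mult_left[OF Wc2 i2 p])
    have e2: "complex_of_real (a ! (p div ?lc) + c ! (p mod ?lc)) = complex_of_real (b ! (\<pi> p div ?ld) + d ! (\<pi> p mod ?ld))"
      using en p by simp
    show "(W * ham_comp a c) $$ (i,p) = (ham_comp b d * W) $$ (i,p)"
      unfolding 1 2
    proof (cases "i = \<pi> p")
      case True
      then show "W $$ (i, p) * complex_of_real (a ! (p div ?lc) + c ! (p mod ?lc)) =
        complex_of_real (b ! (i div ?ld) + d ! (i mod ?ld)) * W $$ (i, p)"
        using e2 p i by (simp add: Wi del: of_real_add)
    next
      case False
      then show "W $$ (i, p) * complex_of_real (a ! (p div ?lc) + c ! (p mod ?lc)) =
        complex_of_real (b ! (i div ?ld) + d ! (i mod ?ld)) * W $$ (i, p)"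
        using p i by (simp add: Wi)
    qed
  qed (use Wc N in \<open>auto simp: ham_comp_eq\<close>)
  have TO: "thermal_op \<beta> a b T"
    unfolding thermal_op_def using vc vd N U E T_def by blast
  have form: "T (exm ?la x) $$ (y,y) = complex_of_real (\<Sum>p < ?N.
        if p div ?lc = x \<and> \<pi> p div ?ld = y then exp (- \<beta> * c ! (p mod ?lc)) / partition_fn \<beta> c else 0)"
    if x: "x < ?la" and y: "y < ?lb" for x y
  proof -
    have "T (exm ?la x) $$ (y,y) = (\<Sum>l<?ld. \<Sum>p<?N. exm ?la x $$ (p div ?lc, p div ?lc) *
        (complex_of_real ((cmod (W $$ (y * ?ld + l, p)))\<^sup>2) * gibbs \<beta> c $$ (p mod ?lc, p mod ?lc)))"
      unfolding T_def using thermal_formula[OF nd Wc N2 E exm_carrier y y] by simp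
    also have "\<dots> = (\<Sum>p<?N. \<Sum>l<?ld. (if p div ?lc = x \<and> y * ?ld + l = \<pi> p then complex_of_real (exp (- \<beta> * c ! (p mod ?lc)) / partition_fn \<beta> c) else 0))"
    proof -
      have "(\<Sum>l<?ld. \<Sum>p<?N. exm ?la x $$ (p div ?lc, p div ?lc) *
        (complex_of_real ((cmod (W $$ (y * ?ld + l, p)))\<^sup>2) * gibbs \<beta> c $$ (p mod ?lc, p mod ?lc)))
        = (\<Sum>l<?ld. \<Sum>p<?N. (if p div ?lc = x \<and> y * ?ld + l = \<pi> p then complex_of_real (exp (- \<beta> * c ! (p mod ?lc)) / partition_fn \<beta> c) else 0))"
      proof (intro sum.cong refl)
        fix l p assume l: "l \<in> {..<?ld}" and p: "p \<in> {..<?N}"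
        have i: "y * ?ld + l < ?N" using divmod_lt[of y ?lb l ?ld] y l N by simp
        have pd: "p div ?lc < ?la" and pm: "p mod ?lc < ?lc" using p div_lt_of_lt_mult mod_lt_of_lt_mult by auto
        show "exm ?la x $$ (p div ?lc, p div ?lc) *
          (complex_of_real ((cmod (W $$ (y * ?ld + l, p)))\<^sup>2) * gibbs \<beta> c $$ (p mod ?lc, p mod ?lc))
          = (if p div ?lc = x \<and> y * ?ld + l = \<pi> p then complex_of_real (exp (- \<beta> * c ! (p mod ?lc)) / partition_fn \<beta> c) else 0)"
          using i p pd pm by (auto simp: Wi exm_def gibbs_index)
      qed
      also have "\<dots> = (\<Sum>p<?N. \<Sum>l<?ld. (if p div ?lc = x \<and> y * ?ld + l = \<pi> p then complex_of_real (exp (- \<beta> * c ! (p mod ?lc)) / partition_fn \<beta> c) else 0))"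
        by (rule sum.swap)
      finally show ?thesis .
    qed
    also have "\<dots> = (\<Sum>p<?N. complex_of_real (if p div ?lc = x \<and> \<pi> p div ?ld = y then exp (- \<beta> * c ! (p mod ?lc)) / partition_fn \<beta> c else 0))"
    proof (intro sum.cong refl)
      fix p assume p: "p \<in> {..<?N}"
      have pp: "\<pi> p < ?lb * ?ld" using pin p N by auto
      then have pm: "\<pi> p mod ?ld < ?ld" using mod_lt_of_lt_mult by blast
      show "(\<Sum>l<?ld. (if p div ?lc = x \<and> y * ?ld + l = \<pi> p then complex_of_real (exp (- \<beta> * c ! (p mod ?lc)) / partition_fn \<beta> c) else 0))
         = complex_of_real (if p div ?lc = x \<and> \<pi> p div ?ld = y then exp (- \<beta> * c ! (p mod ?lc)) / partition_fn \<beta> c else 0)"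
      proof (cases "p div ?lc = x \<and> \<pi> p div ?ld = y")
        case True
        have "(\<Sum>l<?ld. (if p div ?lc = x \<and> y * ?ld + l = \<pi> p then complex_of_real (exp (- \<beta> * c ! (p mod ?lc)) / partition_fn \<beta> c) else 0))
          = (if p div ?lc = x \<and> y * ?ld + \<pi> p mod ?ld = \<pi> p then complex_of_real (exp (- \<beta> * c ! (p mod ?lc)) / partition_fn \<beta> c) else 0)"
        proof (rule sum_single[OF pm])
          fix l assume l: "l < ?ld" "l \<noteq> \<pi> p mod ?ld"
          have m: "(y * ?ld + l) mod ?ld = l" using l(1) by simp
          have "y * ?ld + l \<noteq> \<pi> p"
          proof
            assume h: "y * ?ld + l = \<pi> p"
            have "\<pi> p mod ?ld = l" by (simp only: h[symmetric] m)
            then show False using l(2) by simp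
          qed
          then show "(if p div ?lc = x \<and> y * ?ld + l = \<pi> p then complex_of_real (exp (- \<beta> * c ! (p mod ?lc)) / partition_fn \<beta> c) else 0) = 0"
            by simp
        qed
        also have "y * ?ld + \<pi> p mod ?ld = \<pi> p" using True by (metis div_mult_mod_eq mult.commute)
        finally show ?thesis using True by simp
      next
        case False
        have "y * ?ld + l \<noteq> \<pi> p" if "l < ?ld" "p div ?lc = x" for l
        proof
          assume h: "y * ?ld + l = \<pi> p"
          have l0: "0 < ?ld" using that(1) by (cases d) auto
          have dd: "(y * ?ld + l) div ?ld = y" using that(1) l0 by simp
          then have "\<pi> p div ?ld = y" by (simp only: h)
          then show False using False that by simp
        qed
        then have "(\<Sum>l<?ld. (if p div ?lc = x \<and> y * ?ld + l = \<pi> p then complex_of_real (exp (- \<beta> * c ! (p mod ?lc)) / partition_fn \<beta> c) else 0)) = 0"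
          by (intro sum.neutral ballI) auto
        moreover have "complex_of_real (if p div ?lc = x \<and> \<pi> p div ?ld = y then exp (- \<beta> * c ! (p mod ?lc)) / partition_fn \<beta> c else 0) = 0"
          using False by (simp only: if_False of_real_0)
        ultimately show ?thesis by (simp only:)
      qed
    qed
    also have "\<dots> = complex_of_real (\<Sum>p < ?N.
        if p div ?lc = x \<and> \<pi> p div ?ld = y then exp (- \<beta> * c ! (p mod ?lc)) / partition_fn \<beta> c else 0)"
      by (simp only: of_real_sum)
    finally show ?thesis .
  qed
  show ?thesis using TO form by blast
qed


lemma card_bij_filter:
  assumes "bij_betw f A B"
  shows "card {x\<in>A. Q (f x)} = card {z\<in>B. Q z}"
proof -
  have "bij_betw f {x\<in>A. Q (f x)} {z\<in>B. Q z}"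
    using assms unfolding bij_betw_def inj_on_def by auto
  then show ?thesis by (rule bij_betw_same_card)
qed

lemma divmod_decode: "k < (D::nat) \<Longrightarrow> (x * D + k) div D = x \<and> (x * D + k) mod D = k"
proof -
  assume k: "k < D"
  then have "D > 0" by simp
  then show ?thesis using k by simp
qed

locale latt =
  fixes a b :: "real list" and \<beta> :: real and P :: "nat \<Rightarrow> nat \<Rightarrow> real"
    and M L NR :: nat and lab :: "nat \<Rightarrow> nat \<Rightarrow> nat"
  assumes va: "valid_ham a" and vb: "valid_ham b" and beta: "\<beta> > 0"
    and P0: "\<forall>i<length b. \<forall>j<length a. 0 \<le> P i j"
    and P1: "\<forall>j<length a. (\<Sum>i<length b. P i j) = 1"
    and Pg: "\<forall>i<length b. (\<Sum>j<length a. P i j * diag_vec (gibbs \<beta> a) j) = diag_vec (gibbs \<beta> b) i"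
    and M1: "M \<ge> 1" and L1: "L \<ge> 1"
    and lab_box: "\<forall>r<NR. lab r \<in> PiE {..<length a * length b} (\<lambda>_. {..L})"
    and lab_card: "\<forall>pt \<in> PiE {..<length a * length b} (\<lambda>_. {..L}).
        card {r. r < NR \<and> lab r = pt} = nat \<lceil>real M * exp (\<beta> * (\<Sum>s<length a * length b. real (pt s) * (a ! (s div length b) + b ! (s mod length b))))\<rceil>"
begin

abbreviation "n \<equiv> length a"
abbreviation "m \<equiv> length b"
abbreviation "TT \<equiv> n * m"
definition "h s = a ! (s div m) + b ! (s mod m)"
definition "\<rho> pt = (\<Sum>s<TT. real (pt s) * h s)"
definition "mlt pt = nat \<lceil>real M * exp (\<beta> * \<rho> pt)\<rceil>"
definition "bx = PiE {..<TT} (\<lambda>_. {..L})"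
definition "intr = PiE {..<TT} (\<lambda>_. {1..L})"
definition "upd pt t = pt(t := Suc (pt t))"
definition "dn q t = q(t := q t - 1)"
abbreviation "lc \<equiv> m * NR"
abbreviation "ld \<equiv> n * NR"
abbreviation "N \<equiv> n * lc"
definition "c = map (\<lambda>k. b ! (k div NR) + \<rho> (lab (k mod NR))) [0..<lc]"
definition "d = map (\<lambda>k. a ! (k div NR) + \<rho> (lab (k mod NR))) [0..<ld]"
definition "kc z = (case z of (x, y, r) \<Rightarrow> upd (lab r) (x * m + y))"
definition "decin p = (p div lc, (p mod lc) div NR, (p mod lc) mod NR)"
definition "decout i = ((i mod ld) div NR, i div ld, (i mod ld) mod NR)"
definition "cells = {..<n} \<times> {..<m} \<times> {..<NR}"

lemma n0: "n > 0" using va by (simp add: valid_ham_def)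
lemma m0: "m > 0" using vb by (simp add: valid_ham_def)

lemma a_nonneg: "x < n \<Longrightarrow> a ! x \<ge> 0" using va by (auto simp: valid_ham_def)
lemma b_nonneg: "y < m \<Longrightarrow> b ! y \<ge> 0" using vb by (auto simp: valid_ham_def)

lemma h_nonneg: "s < TT \<Longrightarrow> h s \<ge> 0"
  using a_nonneg b_nonneg div_lt_of_lt_mult[of s n m] mod_lt_of_lt_mult[of s n m] by (simp add: h_def)

lemma h_xy: "y < m \<Longrightarrow> h (x * m + y) = a ! x + b ! y"
  using m0 by (simp add: h_def)

lemma rho_nonneg: "\<rho> pt \<ge> 0"
  unfolding \<rho>_def using h_nonneg by (intro sum_nonneg) auto

lemma rho_upd: "t < TT \<Longrightarrow> \<rho> (upd pt t) = \<rho> pt + h t"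
proof -
  assume t: "t < TT"
  have "\<rho> (upd pt t) = (\<Sum>s<TT. real (pt s) * h s + (if s = t then h t else 0))"
    unfolding \<rho>_def upd_def by (intro sum.cong refl) (auto simp: algebra_simps)
  also have "\<dots> = \<rho> pt + h t" using t by (simp add: sum.distrib \<rho>_def)
  finally show ?thesis .
qed

lemma NR0: "N > 0 \<Longrightarrow> NR > 0" by (cases NR) auto

lemma decin_bij: "bij_betw decin {..<N} cells"
proof (rule bij_betw_byWitness[where f'="\<lambda>(x,y,r). x * lc + (y * NR + r)"])
  show "\<forall>p\<in>{..<N}. (case decin p of (x, y, r) \<Rightarrow> x * lc + (y * NR + r)) = p"
    by (simp only: decin_def prod.case div_mult_mod_eq) simp
  show "\<forall>z\<in>cells. decin (case z of (x, y, r) \<Rightarrow> x * lc + (y * NR + r)) = z"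
  proof
    fix z assume "z \<in> cells"
    then obtain x y r where z: "z = (x,y,r)" "x < n" "y < m" "r < NR" by (auto simp: cells_def)
    have k: "y * NR + r < lc" using divmod_lt[OF z(3) z(4)] by (simp add: mult.commute)
    show "decin (case z of (x, y, r) \<Rightarrow> x * lc + (y * NR + r)) = z"
      using z divmod_decode[OF k, of x] divmod_decode[OF z(4), of y] by (simp add: decin_def)
  qed
  show "decin ` {..<N} \<subseteq> cells"
  proof
    fix z assume "z \<in> decin ` {..<N}"
    then obtain p where p: "p < N" "z = decin p" by auto
    have 1: "p div lc < n" using p div_lt_of_lt_mult by auto
    have 2: "p mod lc < m * NR" using p mod_lt_of_lt_mult by auto
    show "z \<in> cells" using p 1 div_lt_of_lt_mult[OF 2] mod_lt_of_lt_mult[OF 2] by (simp add: decin_def cells_def)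
  qed
  show "(\<lambda>(x,y,r). x * lc + (y * NR + r)) ` cells \<subseteq> {..<N}"
  proof
    fix p assume "p \<in> (\<lambda>(x,y,r). x * lc + (y * NR + r)) ` cells"
    then obtain x y r where z: "p = x * lc + (y * NR + r)" "x < n" "y < m" "r < NR" by (auto simp: cells_def)
    have k: "y * NR + r < lc" using divmod_lt[OF z(3) z(4)] by (simp add: mult.commute)
    show "p \<in> {..<N}" using divmod_lt[OF z(2) k] z(1) by simp
  qed
qed

lemma decout_bij: "bij_betw decout {..<N} cells"
proof (rule bij_betw_byWitness[where f'="\<lambda>(x,y,r). y * ld + (x * NR + r)"])
  show "\<forall>p\<in>{..<N}. (case decout p of (x, y, r) \<Rightarrow> y * ld + (x * NR + r)) = p"
    by (simp only: decout_def prod.case div_mult_mod_eq) simp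
  show "\<forall>z\<in>cells. decout (case z of (x, y, r) \<Rightarrow> y * ld + (x * NR + r)) = z"
  proof
    fix z assume "z \<in> cells"
    then obtain x y r where z: "z = (x,y,r)" "x < n" "y < m" "r < NR" by (auto simp: cells_def)
    have k: "x * NR + r < ld" using divmod_lt[OF z(2) z(4)] by (simp add: mult.commute)
    show "decout (case z of (x, y, r) \<Rightarrow> y * ld + (x * NR + r)) = z"
      using z divmod_decode[OF k, of y] divmod_decode[OF z(4), of x] by (simp add: decout_def)
  qed
  have NN: "N = m * ld" by simp
  show "decout ` {..<N} \<subseteq> cells"
  proof
    fix z assume "z \<in> decout ` {..<N}"
    then obtain p where p: "p < m * ld" "z = decout p" using NN by auto
    have 1: "p div ld < m" using p div_lt_of_lt_mult by auto
    have 2: "p mod ld < n * NR" using p mod_lt_of_lt_mult by auto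
    show "z \<in> cells" using p 1 div_lt_of_lt_mult[OF 2] mod_lt_of_lt_mult[OF 2] by (simp add: decout_def cells_def)
  qed
  show "(\<lambda>(x,y,r). y * ld + (x * NR + r)) ` cells \<subseteq> {..<N}"
  proof
    fix p assume "p \<in> (\<lambda>(x,y,r). y * ld + (x * NR + r)) ` cells"
    then obtain x y r where z: "p = y * ld + (x * NR + r)" "x < n" "y < m" "r < NR" by (auto simp: cells_def)
    have k: "x * NR + r < ld" using divmod_lt[OF z(2) z(4)] by (simp add: mult.commute)
    have "p < m * ld" using divmod_lt[OF z(3) k] z(1) by simp
    then show "p \<in> {..<N}" by (simp only: lessThan_iff mult.left_commute[of m n NR])
  qed
qed

lemma c_len: "length c = lc" by (simp add: c_def)
lemma d_len: "length d = ld" by (simp add: d_def)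
lemma c_nth: "k < lc \<Longrightarrow> c ! k = b ! (k div NR) + \<rho> (lab (k mod NR))" by (simp add: c_def)
lemma d_nth: "k < ld \<Longrightarrow> d ! k = a ! (k div NR) + \<rho> (lab (k mod NR))" by (simp add: d_def)

lemma energy_in:
  assumes "p < N"
  shows "a ! (p div length c) + c ! (p mod length c) = \<rho> (kc (decin p))"
proof -
  obtain x y r where z: "decin p = (x,y,r)" "x < n" "y < m" "r < NR"
  proof -
    have "decin p \<in> cells" using decin_bij assms unfolding bij_betw_def by auto
    then show ?thesis using that by (cases "decin p") (auto simp: cells_def)
  qed
  have k: "p mod lc < lc" using assms mod_lt_of_lt_mult by auto
  have x: "p div lc = x" and y: "(p mod lc) div NR = y" and r: "(p mod lc) mod NR = r" using z(1) by (auto simp: decin_def)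
  have t: "x * m + y < TT" using divmod_lt[OF z(2) z(3)] .
  have "a ! (p div length c) + c ! (p mod length c) = a ! x + (b ! y + \<rho> (lab r))"
    unfolding c_len using c_nth[OF k] x y r by simp
  also have "\<dots> = \<rho> (kc (decin p))" unfolding z(1) kc_def using rho_upd[OF t] h_xy[OF z(3)] by simp
  finally show ?thesis .
qed

lemma energy_out:
  assumes "i < N"
  shows "b ! (i div length d) + d ! (i mod length d) = \<rho> (kc (decout i))"
proof -
  obtain x y r where z: "decout i = (x,y,r)" "x < n" "y < m" "r < NR"
  proof -
    have "decout i \<in> cells" using decout_bij assms unfolding bij_betw_def by auto
    then show ?thesis using that by (cases "decout i") (auto simp: cells_def)
  qed
  have i2: "i < m * ld" using assms by (simp add: mult.left_commute)
  have k: "i mod ld < ld" using i2 mod_lt_of_lt_mult by blast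
  have x: "(i mod ld) div NR = x" and y: "i div ld = y" and r: "(i mod ld) mod NR = r" using z(1) by (auto simp: decout_def)
  have t: "x * m + y < TT" using divmod_lt[OF z(2) z(3)] .
  have "b ! (i div length d) + d ! (i mod length d) = b ! y + (a ! x + \<rho> (lab r))"
    unfolding d_len using d_nth[OF k] x y r by simp
  also have "\<dots> = \<rho> (kc (decout i))" unfolding z(1) kc_def using rho_upd[OF t] h_xy[OF z(3)] by simp
  finally show ?thesis .
qed

end


context latt begin

lemma intr_ge1: "q \<in> intr \<Longrightarrow> t < TT \<Longrightarrow> q t \<ge> 1 \<and> q t \<le> L"
  unfolding intr_def by (auto simp: PiE_iff)

lemma intr_bx: "q \<in> intr \<Longrightarrow> q \<in> bx"
  unfolding intr_def bx_def by (auto simp: PiE_iff)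

lemma dn_bx: "q \<in> intr \<Longrightarrow> t < TT \<Longrightarrow> dn q t \<in> bx"
proof -
  assume q: "q \<in> intr" and t: "t < TT"
  have "q t - 1 \<in> {..L}" using intr_ge1[OF q t] by auto
  then have "q(t := q t - 1) \<in> PiE (insert t {..<TT}) (\<lambda>_. {..L})"
    using intr_bx[OF q] unfolding bx_def by (intro PiE_fun_upd) auto
  moreover have "insert t {..<TT} = {..<TT}" using t by auto
  ultimately show ?thesis unfolding dn_def bx_def by simp
qed

lemma upd_dn: "q \<in> intr \<Longrightarrow> t < TT \<Longrightarrow> upd (dn q t) t = q"
proof -
  assume q: "q \<in> intr" and t: "t < TT"
  have "q t \<ge> 1" using intr_ge1[OF q t] by simp
  then show ?thesis unfolding upd_def dn_def by auto
qed

lemma dn_upd: "dn (upd pt t) t = pt"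
  unfolding upd_def dn_def by auto

lemma rho_dn: "q \<in> intr \<Longrightarrow> t < TT \<Longrightarrow> \<rho> (dn q t) = \<rho> q - h t"
  using rho_upd[of t "dn q t"] upd_dn by simp

lemma mlt_eq: "pt \<in> bx \<Longrightarrow> card {r. r < NR \<and> lab r = pt} = mlt pt"
  using lab_card unfolding bx_def mlt_def \<rho>_def h_def by blast

lemma mlt_lower: "real (mlt pt) \<ge> real M * exp (\<beta> * \<rho> pt)"
proof -
  have "real M * exp (\<beta> * \<rho> pt) \<ge> 0" by simp
  then show ?thesis unfolding mlt_def by linarith
qed

lemma mlt_upper: "real (mlt pt) \<le> real M * exp (\<beta> * \<rho> pt) + 1"
proof -
  have "real M * exp (\<beta> * \<rho> pt) \<ge> 0" by simp
  then show ?thesis unfolding mlt_def by linarith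
qed

lemma mlt_pos: "mlt pt \<ge> 1"
proof -
  have "real M * exp (\<beta> * \<rho> pt) > 0" using M1 by simp
  then have "\<lceil>real M * exp (\<beta> * \<rho> pt)\<rceil> \<ge> 1" by linarith
  then show ?thesis unfolding mlt_def by linarith
qed

lemma bx_ne: "(\<lambda>s. if s < TT then 0 else undefined) \<in> bx"
  unfolding bx_def by (auto simp: PiE_iff extensional_def)

lemma NR_pos: "NR > 0"
proof -
  let ?pt = "(\<lambda>s. if s < TT then 0 else undefined) :: nat \<Rightarrow> nat"
  have "card {r. r < NR \<and> lab r = ?pt} \<ge> 1" using mlt_eq[OF bx_ne] mlt_pos by simp
  then have "{r. r < NR \<and> lab r = ?pt} \<noteq> {}" by (metis card.empty not_one_le_zero)
  then show ?thesis by auto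
qed

lemma lab_in: "r < NR \<Longrightarrow> lab r \<in> bx" using lab_box unfolding bx_def by blast

lemma class_eq: "card {p\<in>{..<N}. kc (decin p) = q} = card {i\<in>{..<N}. kc (decout i) = q}"
  using card_bij_filter[OF decin_bij, of "\<lambda>z. kc z = q"] card_bij_filter[OF decout_bij, of "\<lambda>z. kc z = q"] by simp

lemma row_card:
  assumes q: "q \<in> intr" and x: "x < n"
  shows "(\<Sum>y<m. mlt (dn q (x * m + y))) \<le> card {p\<in>{..<N}. kc (decin p) = q \<and> p div lc = x}"
proof -
  have e1: "card {p\<in>{..<N}. kc (decin p) = q \<and> p div lc = x} = card {z\<in>cells. kc z = q \<and> fst z = x}"
    using card_bij_filter[OF decin_bij, of "\<lambda>z. kc z = q \<and> fst z = x"] by (simp add: decin_def)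
  let ?S = "Sigma {..<m} (\<lambda>y. {r. r < NR \<and> lab r = dn q (x * m + y)})"
  have cS: "card ?S = (\<Sum>y<m. mlt (dn q (x * m + y)))"
  proof -
    have "card ?S = (\<Sum>y<m. card {r. r < NR \<and> lab r = dn q (x * m + y)})" by (simp add: card_SigmaI)
    also have "\<dots> = (\<Sum>y<m. mlt (dn q (x * m + y)))"
    proof (rule sum.cong[OF refl])
      fix y assume "y \<in> {..<m}"
      then have "x * m + y < TT" using divmod_lt[OF x] by simp
      then show "card {r. r < NR \<and> lab r = dn q (x * m + y)} = mlt (dn q (x * m + y))"
        using mlt_eq dn_bx q by blast
    qed
    finally show ?thesis .
  qed
  have "card ?S \<le> card {z\<in>cells. kc z = q \<and> fst z = x}"
  proof (rule card_inj_on_le[where f="\<lambda>(y,r). (x,y,r)"])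
    show "inj_on (\<lambda>(y,r). (x,y,r)) ?S" by (auto simp: inj_on_def)
    show "(\<lambda>(y,r). (x,y,r)) ` ?S \<subseteq> {z\<in>cells. kc z = q \<and> fst z = x}"
    proof
      fix z assume "z \<in> (\<lambda>(y,r). (x,y,r)) ` ?S"
      then obtain y r where yr: "z = (x,y,r)" "y < m" "r < NR" "lab r = dn q (x * m + y)" by auto
      have t: "x * m + y < TT" using divmod_lt[OF x yr(2)] .
      show "z \<in> {z\<in>cells. kc z = q \<and> fst z = x}"
        using yr x t upd_dn[OF q t] by (simp add: cells_def kc_def)
    qed
    show "finite {z\<in>cells. kc z = q \<and> fst z = x}" by (simp add: cells_def)
  qed
  then show ?thesis using e1 cS by simp
qed

lemma col_card:
  assumes q: "q \<in> intr" and y: "y < m"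
  shows "(\<Sum>x<n. mlt (dn q (x * m + y))) \<le> card {i\<in>{..<N}. kc (decout i) = q \<and> i div ld = y}"
proof -
  have e1: "card {i\<in>{..<N}. kc (decout i) = q \<and> i div ld = y} = card {z\<in>cells. kc z = q \<and> fst (snd z) = y}"
    using card_bij_filter[OF decout_bij, of "\<lambda>z. kc z = q \<and> fst (snd z) = y"] by (simp add: decout_def)
  let ?S = "Sigma {..<n} (\<lambda>x. {r. r < NR \<and> lab r = dn q (x * m + y)})"
  have cS: "card ?S = (\<Sum>x<n. mlt (dn q (x * m + y)))"
  proof -
    have "card ?S = (\<Sum>x<n. card {r. r < NR \<and> lab r = dn q (x * m + y)})" by (simp add: card_SigmaI)
    also have "\<dots> = (\<Sum>x<n. mlt (dn q (x * m + y)))"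
    proof (rule sum.cong[OF refl])
      fix x assume "x \<in> {..<n}"
      then have "x * m + y < TT" using divmod_lt[OF _ y] by simp
      then show "card {r. r < NR \<and> lab r = dn q (x * m + y)} = mlt (dn q (x * m + y))"
        using mlt_eq dn_bx q by blast
    qed
    finally show ?thesis .
  qed
  have "card ?S \<le> card {z\<in>cells. kc z = q \<and> fst (snd z) = y}"
  proof (rule card_inj_on_le[where f="\<lambda>(x,r). (x,y,r)"])
    show "inj_on (\<lambda>(x,r). (x,y,r)) ?S" by (auto simp: inj_on_def)
    show "(\<lambda>(x,r). (x,y,r)) ` ?S \<subseteq> {z\<in>cells. kc z = q \<and> fst (snd z) = y}"
    proof
      fix z assume "z \<in> (\<lambda>(x,r). (x,y,r)) ` ?S"
      then obtain x r where xr: "z = (x,y,r)" "x < n" "r < NR" "lab r = dn q (x * m + y)" by auto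
      have t: "x * m + y < TT" using divmod_lt[OF xr(2) y] .
      show "z \<in> {z\<in>cells. kc z = q \<and> fst (snd z) = y}"
        using xr y t upd_dn[OF q t] by (simp add: cells_def kc_def)
    qed
    show "finite {z\<in>cells. kc z = q \<and> fst (snd z) = y}" by (simp add: cells_def)
  qed
  then show ?thesis using e1 cS by simp
qed

end


lemma real_nat_floor_le: "z \<ge> 0 \<Longrightarrow> real (nat \<lfloor>z\<rfloor>) \<le> z"
  by linarith

context latt begin

definition "Za = partition_fn \<beta> a"
definition "Zb = partition_fn \<beta> b"
definition "Lam q x = real M * exp (\<beta> * (\<rho> q - a ! x)) * Zb"
definition "F q y x = (if q \<in> intr then nat \<lfloor>P y x * Lam q x\<rfloor> else 0)"

lemma Za_pos: "Za > 0" unfolding Za_def using partition_pos[OF va] .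
lemma Zb_pos: "Zb > 0" unfolding Zb_def using partition_pos[OF vb] .

lemma Lam_nonneg: "Lam q x \<ge> 0" unfolding Lam_def using Zb_pos by simp

lemma mlt_dn_lower:
  assumes q: "q \<in> intr" and x: "x < n" and y: "y < m"
  shows "real (mlt (dn q (x * m + y))) \<ge> real M * exp (\<beta> * (\<rho> q - a ! x)) * exp (- \<beta> * b ! y)"
proof -
  have t: "x * m + y < TT" using divmod_lt[OF x y] .
  have r: "\<rho> (dn q (x * m + y)) = \<rho> q - a ! x - b ! y" using rho_dn[OF q t] h_xy[OF y] by simp
  have "exp (\<beta> * (\<rho> q - a ! x)) * exp (- \<beta> * b ! y) = exp (\<beta> * (\<rho> q - a ! x) + - \<beta> * b ! y)"
    by (rule exp_add[symmetric])
  also have "\<dots> = exp (\<beta> * \<rho> (dn q (x * m + y)))" unfolding r by (simp add: algebra_simps)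
  finally have e: "exp (\<beta> * (\<rho> q - a ! x)) * exp (- \<beta> * b ! y) = exp (\<beta> * \<rho> (dn q (x * m + y)))" .
  have "real M * exp (\<beta> * (\<rho> q - a ! x)) * exp (- \<beta> * b ! y) = real M * exp (\<beta> * \<rho> (dn q (x * m + y)))"
    by (simp only: mult.assoc e)
  then show ?thesis using mlt_lower[of "dn q (x * m + y)"] by linarith
qed

lemma sum_F_le:
  assumes "\<And>i. i \<in> I \<Longrightarrow> 0 \<le> w i" "finite I"
  shows "real (\<Sum>i\<in>I. nat \<lfloor>w i\<rfloor>) \<le> (\<Sum>i\<in>I. w i)"
proof -
  have "real (\<Sum>i\<in>I. nat \<lfloor>w i\<rfloor>) = (\<Sum>i\<in>I. real (nat \<lfloor>w i\<rfloor>))" by simp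
  also have "\<dots> \<le> (\<Sum>i\<in>I. w i)" using assms by (intro sum_mono real_nat_floor_le) auto
  finally show ?thesis .
qed

lemma rowF:
  assumes x: "x < n"
  shows "(\<Sum>y<m. F q y x) \<le> card {p\<in>{..<N}. kc (decin p) = q \<and> p div lc = x}"
proof (cases "q \<in> intr")
  case False then show ?thesis by (simp add: F_def)
next
  case q: True
  have "real (\<Sum>y<m. F q y x) = real (\<Sum>y<m. nat \<lfloor>P y x * Lam q x\<rfloor>)" using q by (simp add: F_def)
  also have "\<dots> \<le> (\<Sum>y<m. P y x * Lam q x)"
    using P0 x Lam_nonneg by (intro sum_F_le) auto
  also have "\<dots> = Lam q x" using P1 x by (simp add: sum_distrib_right[symmetric])
  also have "\<dots> = (\<Sum>y<m. real M * exp (\<beta> * (\<rho> q - a ! x)) * exp (- \<beta> * b ! y))"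
    unfolding Lam_def Zb_def partition_fn_def by (simp add: sum_distrib_left)
  also have "\<dots> \<le> (\<Sum>y<m. real (mlt (dn q (x * m + y))))"
    using mlt_dn_lower[OF q x] by (intro sum_mono) auto
  also have "\<dots> = real (\<Sum>y<m. mlt (dn q (x * m + y)))" by simp
  also have "\<dots> \<le> real (card {p\<in>{..<N}. kc (decin p) = q \<and> p div lc = x})"
    using row_card[OF q x] by linarith
  finally show ?thesis by linarith
qed

lemma Pg': "y < m \<Longrightarrow> (\<Sum>x<n. P y x * exp (- \<beta> * a ! x)) = Za * exp (- \<beta> * b ! y) / Zb"
proof -
  assume y: "y < m"
  have "(\<Sum>x<n. P y x * (exp (- \<beta> * a ! x) / Za)) = exp (- \<beta> * b ! y) / Zb"
    using Pg y unfolding Za_def Zb_def by (simp add: diag_vec_gibbs)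
  then have "(\<Sum>x<n. P y x * exp (- \<beta> * a ! x)) / Za = exp (- \<beta> * b ! y) / Zb"
    by (simp add: sum_divide_distrib)
  then show ?thesis using Za_pos by (simp add: field_simps)
qed

lemma colF:
  assumes y: "y < m"
  shows "(\<Sum>x<n. F q y x) \<le> card {i\<in>{..<N}. kc (decout i) = q \<and> i div ld = y}"
proof (cases "q \<in> intr")
  case False then show ?thesis by (simp add: F_def)
next
  case q: True
  have "real (\<Sum>x<n. F q y x) = real (\<Sum>x<n. nat \<lfloor>P y x * Lam q x\<rfloor>)" using q by (simp add: F_def)
  also have "\<dots> \<le> (\<Sum>x<n. P y x * Lam q x)"
    using P0 y Lam_nonneg by (intro sum_F_le) auto
  also have "\<dots> = real M * exp (\<beta> * \<rho> q) * Zb * (\<Sum>x<n. P y x * exp (- \<beta> * a ! x))"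
    unfolding Lam_def by (simp add: sum_distrib_left exp_diff field_simps exp_minus)
  also have "\<dots> = real M * exp (\<beta> * \<rho> q) * Za * exp (- \<beta> * b ! y)"
    using Pg'[OF y] Zb_pos by simp
  also have "\<dots> = (\<Sum>x<n. real M * exp (\<beta> * (\<rho> q - a ! x)) * exp (- \<beta> * b ! y))"
    unfolding Za_def partition_fn_def by (simp add: sum_distrib_left sum_distrib_right exp_diff field_simps exp_minus)
  also have "\<dots> \<le> (\<Sum>x<n. real (mlt (dn q (x * m + y))))"
    using mlt_dn_lower[OF q _ y] by (intro sum_mono) auto
  also have "\<dots> = real (\<Sum>x<n. mlt (dn q (x * m + y)))" by simp
  also have "\<dots> \<le> real (card {i\<in>{..<N}. kc (decout i) = q \<and> i div ld = y})"
    using col_card[OF q y] by linarith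
  finally show ?thesis by linarith
qed

lemma sigma_exists:
  "\<exists>\<sigma>. bij_betw \<sigma> {..<N} {..<N} \<and> (\<forall>p\<in>{..<N}. kc (decout (\<sigma> p)) = kc (decin p)) \<and>
     (\<forall>q. \<forall>x\<in>{..<n}. \<forall>y\<in>{..<m}. F q y x \<le> card {p\<in>{..<N}. kc (decin p) = q \<and> p div lc = x \<and> \<sigma> p div ld = y})"
proof (rule exists_bij_counts)
  show "finite {..<N}" "finite {..<N}" "finite {..<n}" "finite {..<m}" by auto
  show "(\<lambda>p. p div lc) ` {..<N} \<subseteq> {..<n}" using div_lt_of_lt_mult by auto
  show "(\<lambda>i. i div ld) ` {..<N} \<subseteq> {..<m}"
  proof
    fix z assume "z \<in> (\<lambda>i. i div ld) ` {..<N}"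
    then obtain i where i: "i < N" "z = i div ld" by auto
    have "i < m * ld" using i(1) by (simp only: mult.left_commute[of n m NR])
    then show "z \<in> {..<m}" using i(2) div_lt_of_lt_mult by auto
  qed
  show "\<forall>q. card {p\<in>{..<N}. kc (decin p) = q} = card {i\<in>{..<N}. kc (decout i) = q}"
    using class_eq by blast
  show "\<forall>q. \<forall>x\<in>{..<n}. (\<Sum>y\<in>{..<m}. F q y x) \<le> card {p\<in>{..<N}. kc (decin p) = q \<and> p div lc = x}"
    using rowF by blast
  show "\<forall>q. \<forall>y\<in>{..<m}. (\<Sum>x\<in>{..<n}. F q y x) \<le> card {i\<in>{..<N}. kc (decout i) = q \<and> i div ld = y}"
    using colF by blast
qed

end


context latt begin

definition "ZR = (\<Sum>r<NR. exp (- \<beta> * \<rho> (lab r)))"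
definition "Zc = partition_fn \<beta> c"

lemma valid_c: "valid_ham c"
proof -
  have "lc > 0" using m0 NR_pos by simp
  moreover have "0 \<le> x" if "x \<in> set c" for x
  proof -
    have "x \<in> (\<lambda>k. b ! (k div NR) + \<rho> (lab (k mod NR))) ` {0..<lc}" using that by (simp add: c_def)
    then obtain k where k: "k < lc" "x = b ! (k div NR) + \<rho> (lab (k mod NR))" by auto
    have "k div NR < m" using k(1) div_lt_of_lt_mult by blast
    then show ?thesis using k b_nonneg rho_nonneg by (simp add: add_nonneg_nonneg)
  qed
  ultimately show ?thesis unfolding valid_ham_def using c_len by (auto simp del: length_greater_0_conv)
qed

lemma valid_d: "valid_ham d"
proof -
  have "ld > 0" using n0 NR_pos by simp
  moreover have "0 \<le> x" if "x \<in> set d" for x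
  proof -
    have "x \<in> (\<lambda>k. a ! (k div NR) + \<rho> (lab (k mod NR))) ` {0..<ld}" using that by (simp add: d_def)
    then obtain k where k: "k < ld" "x = a ! (k div NR) + \<rho> (lab (k mod NR))" by auto
    have "k div NR < n" using k(1) div_lt_of_lt_mult by blast
    then show ?thesis using k a_nonneg rho_nonneg by (simp add: add_nonneg_nonneg)
  qed
  ultimately show ?thesis unfolding valid_ham_def using d_len by (auto simp del: length_greater_0_conv)
qed

lemma Zc_eq: "Zc = Zb * ZR"
proof -
  have "Zc = (\<Sum>k<m*NR. exp (- \<beta> * (b ! (k div NR) + \<rho> (lab (k mod NR)))))"
    unfolding Zc_def partition_fn_def c_len by (intro sum.cong refl) (simp add: c_nth)
  also have "\<dots> = (\<Sum>y<m. \<Sum>r<NR. exp (- \<beta> * (b ! y + \<rho> (lab r))))"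
    by (rule sum_divmod)
  also have "\<dots> = (\<Sum>y<m. exp (- \<beta> * b ! y) * ZR)"
    unfolding ZR_def by (simp add: sum_distrib_left algebra_simps exp_add[symmetric])
  also have "\<dots> = Zb * ZR" unfolding Zb_def partition_fn_def by (simp add: sum_distrib_right)
  finally show ?thesis .
qed

lemma ZR_group: "ZR = (\<Sum>pt\<in>bx. real (mlt pt) * exp (- \<beta> * \<rho> pt))"
proof -
  have fb: "finite bx" unfolding bx_def by (simp add: finite_PiE)
  have "ZR = (\<Sum>pt\<in>bx. \<Sum>r\<in>{r. r \<in> {..<NR} \<and> lab r = pt}. exp (- \<beta> * \<rho> (lab r)))"
    unfolding ZR_def by (rule sum.group[symmetric]) (use fb lab_in in auto)
  also have "\<dots> = (\<Sum>pt\<in>bx. real (mlt pt) * exp (- \<beta> * \<rho> pt))"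
  proof (rule sum.cong[OF refl])
    fix pt assume pt: "pt \<in> bx"
    have "(\<Sum>r\<in>{r. r \<in> {..<NR} \<and> lab r = pt}. exp (- \<beta> * \<rho> (lab r))) = (\<Sum>r\<in>{r. r \<in> {..<NR} \<and> lab r = pt}. exp (- \<beta> * \<rho> pt))"
      by (rule sum.cong) auto
    also have "\<dots> = real (card {r. r < NR \<and> lab r = pt}) * exp (- \<beta> * \<rho> pt)" by simp
    also have "\<dots> = real (mlt pt) * exp (- \<beta> * \<rho> pt)" using mlt_eq[OF pt] by simp
    finally show "(\<Sum>r\<in>{r. r \<in> {..<NR} \<and> lab r = pt}. exp (- \<beta> * \<rho> (lab r))) = real (mlt pt) * exp (- \<beta> * \<rho> pt)" .
  qed
  finally show ?thesis .
qed

lemma mlt_exp_bounds: "real M \<le> real (mlt pt) * exp (- \<beta> * \<rho> pt) \<and> real (mlt pt) * exp (- \<beta> * \<rho> pt) \<le> real M + 1"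
proof
  have e: "exp (\<beta> * \<rho> pt) * exp (- \<beta> * \<rho> pt) = 1" by (simp add: exp_minus)
  have ep: "exp (- \<beta> * \<rho> pt) > 0" by simp
  have le1: "exp (- \<beta> * \<rho> pt) \<le> 1" using beta rho_nonneg[of pt] by simp
  have "real M = real M * exp (\<beta> * \<rho> pt) * exp (- \<beta> * \<rho> pt)" using e by (simp add: mult.assoc)
  also have "\<dots> \<le> real (mlt pt) * exp (- \<beta> * \<rho> pt)" using mlt_lower[of pt] ep by (intro mult_right_mono) auto
  finally show "real M \<le> real (mlt pt) * exp (- \<beta> * \<rho> pt)" .
  have "real (mlt pt) * exp (- \<beta> * \<rho> pt) \<le> (real M * exp (\<beta> * \<rho> pt) + 1) * exp (- \<beta> * \<rho> pt)"
    using mlt_upper[of pt] ep by (intro mult_right_mono) auto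
  also have "\<dots> = real M + exp (- \<beta> * \<rho> pt)" using e by (simp add: algebra_simps)
  also have "\<dots> \<le> real M + 1" using le1 by simp
  finally show "real (mlt pt) * exp (- \<beta> * \<rho> pt) \<le> real M + 1" .
qed

lemma card_bx: "card bx = (L+1) ^ TT"
  unfolding bx_def by (simp add: card_PiE)

lemma card_intr: "card intr = L ^ TT"
  unfolding intr_def by (simp add: card_PiE)

lemma ZR_bounds: "real (card bx) * real M \<le> ZR \<and> ZR \<le> real (card bx) * (real M + 1)"
proof -
  have fb: "finite bx" unfolding bx_def by (simp add: finite_PiE)
  have "(\<Sum>pt\<in>bx. real M) \<le> (\<Sum>pt\<in>bx. real (mlt pt) * exp (- \<beta> * \<rho> pt))"
    using mlt_exp_bounds by (intro sum_mono) auto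
  moreover have "(\<Sum>pt\<in>bx. real (mlt pt) * exp (- \<beta> * \<rho> pt)) \<le> (\<Sum>pt\<in>bx. real M + 1)"
    using mlt_exp_bounds by (intro sum_mono) auto
  ultimately show ?thesis unfolding ZR_group by simp
qed

lemma rho_ge_a:
  assumes q: "q \<in> intr" and x: "x < n"
  shows "\<rho> q \<ge> a ! x"
proof -
  have t: "x * m + 0 < TT" using divmod_lt[OF x m0] .
  have "real (q (x * m)) * h (x * m) \<le> \<rho> q"
    unfolding \<rho>_def using t h_nonneg by (intro member_le_sum) auto
  moreover have "q (x * m) \<ge> 1" using intr_ge1[OF q] t by simp
  moreover have "h (x * m) = a ! x + b ! 0" using h_xy[OF m0, of x] by simp
  moreover have "b ! 0 \<ge> 0" using b_nonneg m0 by simp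
  moreover have "h (x * m) \<ge> 0" using h_nonneg t by simp
  ultimately have "h (x * m) \<le> \<rho> q"
  proof -
    assume A: "real (q (x * m)) * h (x * m) \<le> \<rho> q" "q (x * m) \<ge> 1" "h (x * m) = a ! x + b ! 0" "b ! 0 \<ge> 0" "h (x * m) \<ge> 0"
    have "1 \<le> real (q (x * m))" using A(2) by simp
    then have "1 * h (x * m) \<le> real (q (x * m)) * h (x * m)" using A(5) by (rule mult_right_mono)
    then show ?thesis using A(1) by simp
  qed
  then show ?thesis using \<open>h (x * m) = a ! x + b ! 0\<close> \<open>b ! 0 \<ge> 0\<close> by linarith
qed

end


context latt begin

definition "gam k = exp (- \<beta> * c ! k) / Zc"
definition "del = 1 / (real M + 1) + real TT / (real L + 1) + 1 / (Zb * real M)"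

lemma Zc_pos: "Zc > 0" unfolding Zc_def using partition_pos[OF valid_c] .
lemma ZR_pos: "ZR > 0" using Zc_eq Zc_pos Zb_pos by (metis zero_less_mult_pos)

lemma gam_nonneg: "gam k \<ge> 0" unfolding gam_def using Zc_pos by simp

definition "V \<sigma> x y = (\<Sum>p<N. if p div lc = x \<and> \<sigma> p div ld = y then gam (p mod lc) else 0)"

lemma V_nonneg: "V \<sigma> x y \<ge> 0"
  unfolding V_def using gam_nonneg by (intro sum_nonneg) auto

lemma V_sum:
  assumes bij: "bij_betw \<sigma> {..<N} {..<N}" and x: "x < n"
  shows "(\<Sum>y<m. V \<sigma> x y) = 1"
proof -
  have "(\<Sum>y<m. V \<sigma> x y) = (\<Sum>p<N. \<Sum>y<m. if p div lc = x \<and> \<sigma> p div ld = y then gam (p mod lc) else 0)"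
    unfolding V_def by (rule sum.swap)
  also have "\<dots> = (\<Sum>p<N. if p div lc = x then gam (p mod lc) else 0)"
  proof (rule sum.cong[OF refl])
    fix p assume p: "p \<in> {..<N}"
    have "\<sigma> p < N" using bij p by (auto simp: bij_betw_def)
    then have sp: "\<sigma> p < m * ld" by (simp only: mult.left_commute[of n m NR])
    have yl: "\<sigma> p div ld < m" using div_lt_of_lt_mult[OF sp] .
    show "(\<Sum>y<m. if p div lc = x \<and> \<sigma> p div ld = y then gam (p mod lc) else 0) = (if p div lc = x then gam (p mod lc) else 0)"
      by (subst sum_single[OF yl]) auto
  qed
  also have "\<dots> = (\<Sum>x'<n. \<Sum>k<lc. if x' = x then gam k else 0)"
    by (rule sum_divmod)
  also have "\<dots> = (\<Sum>k<lc. gam k)"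
    by (subst sum_single[OF x]) auto
  also have "\<dots> = (\<Sum>k<lc. exp (- \<beta> * c ! k)) / Zc" unfolding gam_def by (simp add: sum_divide_distrib)
  also have "\<dots> = 1" using Zc_pos unfolding Zc_def partition_fn_def c_len by simp
  finally show ?thesis .
qed

lemma V_lower:
  assumes bij: "bij_betw \<sigma> {..<N} {..<N}"
    and cnt: "\<forall>q. \<forall>x\<in>{..<n}. \<forall>y\<in>{..<m}. F q y x \<le> card {p\<in>{..<N}. kc (decin p) = q \<and> p div lc = x \<and> \<sigma> p div ld = y}"
    and x: "x < n" and y: "y < m"
  shows "V \<sigma> x y \<ge> P y x - del"
proof -
  define B where "B = {p\<in>{..<N}. p div lc = x \<and> \<sigma> p div ld = y}"
  define A where "A q = {p\<in>{..<N}. kc (decin p) = q \<and> p div lc = x \<and> \<sigma> p div ld = y}" for q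
  have fi: "finite intr" unfolding intr_def by (simp add: finite_PiE)
  have V1: "V \<sigma> x y = (\<Sum>p\<in>B. gam (p mod lc))"
    unfolding V_def B_def by (rule sum.inter_filter[symmetric]) simp
  have sub: "(\<Union>q\<in>intr. A q) \<subseteq> B" unfolding A_def B_def by auto
  have step1: "(\<Sum>p\<in>(\<Union>q\<in>intr. A q). gam (p mod lc)) \<le> (\<Sum>p\<in>B. gam (p mod lc))"
    by (rule sum_mono2) (use sub gam_nonneg in \<open>auto simp: B_def\<close>)
  have U: "(\<Sum>p\<in>(\<Union>q\<in>intr. A q). gam (p mod lc)) = (\<Sum>q\<in>intr. \<Sum>p\<in>A q. gam (p mod lc))"
    by (rule sum.UNION_disjoint) (use fi in \<open>auto simp: A_def\<close>)
  define E where "E q = exp (- \<beta> * (\<rho> q - a ! x)) / Zc" for q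
  have gA: "gam (p mod lc) = E q" if "q \<in> intr" "p \<in> A q" for q p
  proof -
    have p: "p < N" "kc (decin p) = q" "p div lc = x" using that(2) by (auto simp: A_def)
    have "a ! (p div length c) + c ! (p mod length c) = \<rho> (kc (decin p))" by (rule energy_in[OF p(1)])
    then have "c ! (p mod lc) = \<rho> q - a ! x" using p c_len by simp
    then show ?thesis unfolding gam_def E_def by simp
  qed
  have trm: "(\<Sum>p\<in>A q. gam (p mod lc)) \<ge> (P y x * real M * Zb - 1) / Zc" if q: "q \<in> intr" for q
  proof -
    have "(\<Sum>p\<in>A q. gam (p mod lc)) = real (card (A q)) * E q"
      using gA[OF q] by simp
    moreover have "real (card (A q)) \<ge> P y x * Lam q x - 1"
    proof -
      have "F q y x \<le> card (A q)" using cnt x y unfolding A_def by blast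
      moreover have "real (F q y x) \<ge> P y x * Lam q x - 1"
      proof -
        have "real (F q y x) = real (nat \<lfloor>P y x * Lam q x\<rfloor>)" using q by (simp add: F_def)
        then show ?thesis by linarith
      qed
      ultimately show ?thesis by linarith
    qed
    moreover have E0: "E q \<ge> 0" unfolding E_def using Zc_pos by simp
    ultimately have "(\<Sum>p\<in>A q. gam (p mod lc)) \<ge> (P y x * Lam q x - 1) * E q"
      by (simp add: mult_right_mono)
    moreover have "(P y x * Lam q x - 1) * E q = (P y x * real M * Zb - exp (- \<beta> * (\<rho> q - a ! x))) / Zc"
    proof -
      have "exp (\<beta> * (\<rho> q - a ! x)) * exp (- \<beta> * (\<rho> q - a ! x)) = 1" by (simp add: exp_minus)
      then show ?thesis unfolding Lam_def E_def by (simp add: field_simps)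
    qed
    moreover have "exp (- \<beta> * (\<rho> q - a ! x)) \<le> 1" using rho_ge_a[OF q x] beta by simp
    ultimately show ?thesis using Zc_pos by (smt (verit, ccfv_SIG) divide_right_mono)
  qed
  have step2: "(\<Sum>q\<in>intr. \<Sum>p\<in>A q. gam (p mod lc)) \<ge> real (card intr) * ((P y x * real M * Zb - 1) / Zc)"
  proof -
    have "(\<Sum>q\<in>intr. (P y x * real M * Zb - 1) / Zc) \<le> (\<Sum>q\<in>intr. \<Sum>p\<in>A q. gam (p mod lc))"
      using trm by (intro sum_mono) auto
    then show ?thesis by simp
  qed
  define CI where "CI = real (card intr)"
  define CB where "CB = real (card bx)"
  have CIpos: "CI > 0" unfolding CI_def card_intr using L1 by simp
  have CBpos: "CB > 0" unfolding CB_def card_bx by simp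
  have CICB: "CI \<le> CB" unfolding CI_def CB_def card_intr card_bx by (simp add: power_mono)
  have ZRb: "CB * real M \<le> ZR" "ZR \<le> CB * (real M + 1)" using ZR_bounds unfolding CB_def by auto
  have P01: "0 \<le> P y x" "P y x \<le> 1"
  proof -
    show "0 \<le> P y x" using P0 x y by blast
    have "P y x \<le> (\<Sum>i<m. P i x)" using P0 x y by (intro member_le_sum) auto
    then show "P y x \<le> 1" using P1 x by simp
  qed
  have Mpos: "real M > 0" using M1 by simp
  have step3: "CI * ((P y x * real M * Zb - 1) / Zc) = CI * P y x * real M / ZR - CI / (Zb * ZR)"
    using Zc_eq Zb_pos ZR_pos by (simp add: field_simps)
  have step4: "CI * P y x * real M / ZR \<ge> P y x * (real M / (real M + 1)) * (CI / CB)"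
  proof -
    have "CI * P y x * real M / ZR \<ge> CI * P y x * real M / (CB * (real M + 1))"
      using ZRb ZR_pos CIpos P01 Mpos by (intro divide_left_mono) auto
    then show ?thesis by (simp add: field_simps)
  qed
  have step5: "CI / (Zb * ZR) \<le> 1 / (Zb * real M)"
  proof -
    have "CI / (Zb * ZR) \<le> CB / (Zb * (CB * real M))"
      using ZRb CICB Zb_pos CIpos Mpos ZR_pos by (intro frac_le) auto
    also have "\<dots> = 1 / (Zb * real M)" using CBpos by simp
    finally show ?thesis .
  qed
  have step6: "CI / CB \<ge> 1 - real TT / (real L + 1)"
  proof -
    have "CI / CB = (real L / (real L + 1)) ^ TT" unfolding CI_def CB_def card_intr card_bx by (simp add: power_divide add.commute)
    also have "real L / (real L + 1) = 1 + (- 1 / (real L + 1))" by (simp add: field_simps)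
    finally have e: "CI / CB = (1 + (- 1 / (real L + 1))) ^ TT" .
    have "1 + real TT * (- 1 / (real L + 1)) \<le> (1 + (- 1 / (real L + 1))) ^ TT"
      by (rule Bernoulli_inequality) (simp add: field_simps)
    then show ?thesis unfolding e by simp
  qed
  have r1: "0 \<le> real M / (real M + 1)" "real M / (real M + 1) \<le> 1" using Mpos by auto
  have r2: "0 \<le> CI / CB" "CI / CB \<le> 1" using CIpos CBpos CICB by auto
  have "P y x * (real M / (real M + 1)) * (CI / CB) \<ge> P y x * (real M / (real M + 1)) * (1 - real TT / (real L + 1))"
    using step6 P01 r1 by (intro mult_left_mono) auto
  moreover have "P y x * (real M / (real M + 1)) * (1 - real TT / (real L + 1)) \<ge> P y x * (real M / (real M + 1)) - real TT / (real L + 1)"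
  proof -
    have "P y x * (real M / (real M + 1)) \<le> 1" by (rule mult_le_one) (use P01 r1 in auto)
    moreover have "P y x * (real M / (real M + 1)) \<ge> 0" using P01 r1 by simp
    moreover have "real TT / (real L + 1) \<ge> 0" by simp
    ultimately have "P y x * (real M / (real M + 1)) * (real TT / (real L + 1)) \<le> real TT / (real L + 1)"
      by (intro mult_left_le_one_le) auto
    moreover have "P y x * (real M / (real M + 1)) * (1 - real TT / (real L + 1)) = P y x * (real M / (real M + 1)) - P y x * (real M / (real M + 1)) * (real TT / (real L + 1))"
      by (simp add: right_diff_distrib)
    ultimately show ?thesis by linarith
  qed
  moreover have "P y x * (real M / (real M + 1)) \<ge> P y x - 1 / (real M + 1)"
  proof -
    have "real M / (real M + 1) = 1 - 1 / (real M + 1)" using Mpos by (simp add: field_simps)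
    then have "P y x * (real M / (real M + 1)) = P y x - P y x / (real M + 1)" by (simp only: right_diff_distrib mult_1_right times_divide_eq_right)
    moreover have "P y x / (real M + 1) \<le> 1 / (real M + 1)" using P01 Mpos by (intro divide_right_mono) auto
    ultimately show ?thesis by simp
  qed
  ultimately have "P y x * (real M / (real M + 1)) * (CI / CB) \<ge> P y x - 1 / (real M + 1) - real TT / (real L + 1)"
    by linarith
  then have "CI * ((P y x * real M * Zb - 1) / Zc) \<ge> P y x - del"
    using step3 step4 step5 unfolding del_def by linarith
  then show ?thesis using V1 step1 U step2 unfolding CI_def by linarith
qed

lemma locale_main:
  assumes nd: "rel_nondeg a b"
  shows "\<exists>T W. thermal_op \<beta> a b T \<and> (\<forall>x<n. \<forall>y<m. T (exm n x) $$ (y,y) = complex_of_real (W x y)) \<and>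
     (\<forall>x<n. \<forall>y<m. W x y \<ge> P y x - del \<and> W x y \<ge> 0) \<and> (\<forall>x<n. (\<Sum>y<m. W x y) = 1)"
proof -
  obtain \<sigma> where bij: "bij_betw \<sigma> {..<N} {..<N}" and key: "\<forall>p\<in>{..<N}. kc (decout (\<sigma> p)) = kc (decin p)"
    and cnt: "\<forall>q. \<forall>x\<in>{..<n}. \<forall>y\<in>{..<m}. F q y x \<le> card {p\<in>{..<N}. kc (decin p) = q \<and> p div lc = x \<and> \<sigma> p div ld = y}"
    using sigma_exists by blast
  have N2: "length a * length c = length b * length d" using c_len d_len by simp
  have bij2: "bij_betw \<sigma> {..<length a * length c} {..<length a * length c}" using bij c_len by simp
  have en: "\<forall>p < length a * length c. b ! (\<sigma> p div length d) + d ! (\<sigma> p mod length d) = a ! (p div length c) + c ! (p mod length c)"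
  proof (intro allI impI)
    fix p assume "p < length a * length c"
    then have p: "p < N" using c_len by simp
    have sp: "\<sigma> p < N" using bij p by (auto simp: bij_betw_def)
    show "b ! (\<sigma> p div length d) + d ! (\<sigma> p mod length d) = a ! (p div length c) + c ! (p mod length c)"
      using energy_out[OF sp] energy_in[OF p] key p by simp
  qed
  obtain T where T: "thermal_op \<beta> a b T" and Tf: "\<forall>x < length a. \<forall>y < length b.
     T (exm (length a) x) $$ (y,y) = complex_of_real (\<Sum>p < length a * length c.
        if p div length c = x \<and> \<sigma> p div length d = y then exp (- \<beta> * c ! (p mod length c)) / partition_fn \<beta> c else 0)"
    using perm_thermal[OF nd valid_c valid_d N2 bij2 en] by blast
  have TV: "\<forall>x<n. \<forall>y<m. T (exm n x) $$ (y,y) = complex_of_real (V \<sigma> x y)"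
    using Tf unfolding V_def gam_def Zc_def c_len d_len by simp
  show ?thesis
    using T TV V_lower[OF bij cnt] V_nonneg V_sum[OF bij] by blast
qed

end


context latt begin
lemma del_eq: "del = 1 / (real M + 1) + real (length a * length b) / (real L + 1) + 1 / (partition_fn \<beta> b * real M)"
  unfolding del_def Zb_def by simp
end

lemma exists_lab:
  fixes B :: "(nat \<Rightarrow> nat) set" and f :: "(nat \<Rightarrow> nat) \<Rightarrow> nat"
  assumes "finite B"
  shows "\<exists>(NR::nat) (lab::nat \<Rightarrow> nat \<Rightarrow> nat). (\<forall>r<NR. lab r \<in> B) \<and> (\<forall>pt\<in>B. card {r. r < NR \<and> lab r = pt} = f pt)"
proof -
  define R where "R = Sigma B (\<lambda>pt. {..<f pt})"
  have fR: "finite R" unfolding R_def using assms by auto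
  obtain e where e: "bij_betw e {0..<card R} R" using ex_bij_betw_nat_finite[OF fR] by blast
  have e2: "bij_betw e {..<card R} R" using e by (simp add: atLeast0LessThan)
  define lab where "lab r = fst (e r)" for r
  have 1: "\<forall>r<card R. lab r \<in> B"
  proof (intro allI impI)
    fix r assume "r < card R"
    then have "e r \<in> R" using e2 by (auto simp: bij_betw_def)
    then show "lab r \<in> B" unfolding R_def lab_def by auto
  qed
  have 2: "\<forall>pt\<in>B. card {r. r < card R \<and> lab r = pt} = f pt"
  proof
    fix pt assume pt: "pt \<in> B"
    have "card {r\<in>{..<card R}. fst (e r) = pt} = card {z\<in>R. fst z = pt}"
      by (rule card_bij_filter[OF e2])
    moreover have "{z\<in>R. fst z = pt} = {pt} \<times> {..<f pt}" unfolding R_def using pt by auto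
    moreover have "{r\<in>{..<card R}. fst (e r) = pt} = {r. r < card R \<and> lab r = pt}" unfolding lab_def by auto
    ultimately show "card {r. r < card R \<and> lab r = pt} = f pt" by simp
  qed
  show ?thesis using 1 2 by blast
qed

lemma approx_TO2:
  assumes beta: "\<beta> > 0" and va: "valid_ham a" and vb: "valid_ham b" and nd: "rel_nondeg a b"
    and P0: "\<forall>i<length b. \<forall>j<length a. 0 \<le> P i j" and P1: "\<forall>j<length a. (\<Sum>i<length b. P i j) = 1"
    and Pg: "\<forall>i<length b. (\<Sum>j<length a. P i j * diag_vec (gibbs \<beta> a) j) = diag_vec (gibbs \<beta> b) i"
  shows "\<exists>T. (\<forall>k. thermal_op \<beta> a b (T k)) \<and>
     (\<forall>x<length a. \<forall>y<length b. (\<lambda>k. T k (exm (length a) x) $$ (y,y)) \<longlonglongrightarrow> complex_of_real (P y x))"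
proof -
  let ?n = "length a" and ?m = "length b"
  let ?TT = "?n * ?m"
  let ?Zb = "partition_fn \<beta> b"
  have Zb: "?Zb > 0" using partition_pos[OF vb] .
  define dK where "dK K = 1 / (real (Suc K) + 1) + real ?TT / (real (Suc K) + 1) + 1 / (?Zb * real (Suc K))" for K
  have each: "\<exists>T W. thermal_op \<beta> a b T \<and> (\<forall>x<?n. \<forall>y<?m. T (exm ?n x) $$ (y,y) = complex_of_real (W x y)) \<and>
     (\<forall>x<?n. \<forall>y<?m. W x y \<ge> P y x - dK K \<and> W x y \<ge> 0) \<and> (\<forall>x<?n. (\<Sum>y<?m. W x y) = 1)" for K
  proof -
    let ?M = "Suc K" and ?L = "Suc K"
    let ?B = "PiE {..<?TT} (\<lambda>_. {..?L})"
    have fB: "finite ?B" by (simp add: finite_PiE)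
    obtain NR :: nat and lab :: "nat \<Rightarrow> nat \<Rightarrow> nat" where lab1: "\<forall>r<NR. lab r \<in> ?B"
      and lab2: "\<forall>pt\<in>?B. card {r. r < NR \<and> lab r = pt} = nat \<lceil>real ?M * exp (\<beta> * (\<Sum>s<?TT. real (pt s) * (a ! (s div ?m) + b ! (s mod ?m))))\<rceil>"
      using exists_lab[OF fB, of "\<lambda>pt. nat \<lceil>real ?M * exp (\<beta> * (\<Sum>s<?TT. real (pt s) * (a ! (s div ?m) + b ! (s mod ?m))))\<rceil>"]
      by blast
    have inst: "latt a b \<beta> P ?M ?L NR lab"
      by (unfold_locales) (use va vb beta P0 P1 Pg lab1 lab2 in auto)
    show ?thesis using latt.locale_main[OF inst nd] latt.del_eq[OF inst] unfolding dK_def by simp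
  qed
  then obtain T W where TW: "\<forall>K. thermal_op \<beta> a b (T K) \<and> (\<forall>x<?n. \<forall>y<?m. T K (exm ?n x) $$ (y,y) = complex_of_real (W K x y)) \<and>
     (\<forall>x<?n. \<forall>y<?m. W K x y \<ge> P y x - dK K \<and> W K x y \<ge> 0) \<and> (\<forall>x<?n. (\<Sum>y<?m. W K x y) = 1)"
    by metis
  have dK0: "dK K \<ge> 0" for K unfolding dK_def using Zb by simp
  have dKlim: "dK \<longlonglongrightarrow> 0"
  proof -
    have i1: "(\<lambda>K. inverse (real (Suc (Suc K)))) \<longlonglongrightarrow> 0"
      using LIMSEQ_Suc[OF LIMSEQ_inverse_real_of_nat] by simp
    have i2: "(\<lambda>K. inverse (real (Suc K))) \<longlonglongrightarrow> 0" by (rule LIMSEQ_inverse_real_of_nat)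
    have "(\<lambda>K. inverse (real (Suc (Suc K))) + real ?TT * inverse (real (Suc (Suc K))) + (1 / ?Zb) * inverse (real (Suc K))) \<longlonglongrightarrow> 0 + real ?TT * 0 + (1 / ?Zb) * 0"
      by (intro tendsto_intros i1 i2)
    moreover have "dK = (\<lambda>K. inverse (real (Suc (Suc K))) + real ?TT * inverse (real (Suc (Suc K))) + (1 / ?Zb) * inverse (real (Suc K)))"
      unfolding dK_def by (rule ext) (simp add: field_simps)
    ultimately show ?thesis by simp
  qed
  have bound: "\<bar>W K x y - P y x\<bar> \<le> real ?m * dK K" if x: "x < ?n" and y: "y < ?m" for K x y
  proof -
    have lo: "W K x y' \<ge> P y' x - dK K" if "y' < ?m" for y' using TW x that by blast
    have s1: "(\<Sum>y'<?m. W K x y') = 1" using TW x by blast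
    have s2: "(\<Sum>y'<?m. P y' x) = 1" using P1 x by blast
    have "W K x y - P y x = (\<Sum>y'\<in>{..<?m}-{y}. P y' x - W K x y')"
    proof -
      have "(\<Sum>y'<?m. W K x y') = W K x y + (\<Sum>y'\<in>{..<?m}-{y}. W K x y')" using y by (simp add: sum.remove)
      moreover have "(\<Sum>y'<?m. P y' x) = P y x + (\<Sum>y'\<in>{..<?m}-{y}. P y' x)" using y by (simp add: sum.remove)
      ultimately show ?thesis using s1 s2 by (simp add: sum_subtractf)
    qed
    also have "\<dots> \<le> (\<Sum>y'\<in>{..<?m}-{y}. dK K)" proof (rule sum_mono)
      fix y' assume "y' \<in> {..<?m}-{y}"
      then have "y' < ?m" by simp
      then show "P y' x - W K x y' \<le> dK K" using lo[of y'] by linarith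
    qed
    also have "\<dots> \<le> (\<Sum>y'<?m. dK K)" using dK0 by (intro sum_mono2) auto
    also have "\<dots> = real ?m * dK K" by simp
    finally have up: "W K x y - P y x \<le> real ?m * dK K" .
    have "real ?m \<ge> 1" using vb by (cases b) (auto simp: valid_ham_def)
    then have "1 * dK K \<le> real ?m * dK K" using dK0 by (intro mult_right_mono) auto
    then have "dK K \<le> real ?m * dK K" by simp
    then show ?thesis using up lo[OF y] by linarith
  qed
  have conv: "(\<lambda>K. T K (exm ?n x) $$ (y,y)) \<longlonglongrightarrow> complex_of_real (P y x)" if x: "x < ?n" and y: "y < ?m" for x y
  proof -
    have "(\<lambda>K. W K x y) \<longlonglongrightarrow> P y x"
    proof (rule tendsto_sandwich[where f="\<lambda>K. P y x - real ?m * dK K" and h="\<lambda>K. P y x + real ?m * dK K"])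
      show "eventually (\<lambda>K. P y x - real ?m * dK K \<le> W K x y) sequentially"
      proof (intro always_eventually allI)
        fix K
        have "\<bar>W K x y - P y x\<bar> \<le> real ?m * dK K" by (rule bound[OF x y])
        then show "P y x - real ?m * dK K \<le> W K x y" by (simp add: abs_le_iff)
      qed
      show "eventually (\<lambda>K. W K x y \<le> P y x + real ?m * dK K) sequentially"
      proof (intro always_eventually allI)
        fix K
        have "\<bar>W K x y - P y x\<bar> \<le> real ?m * dK K" by (rule bound[OF x y])
        then show "W K x y \<le> P y x + real ?m * dK K" by (simp add: abs_le_iff)
      qed
      show "(\<lambda>K. P y x - real ?m * dK K) \<longlonglongrightarrow> P y x"
        using tendsto_diff[OF tendsto_const tendsto_mult[OF tendsto_const dKlim], of "P y x" "real ?m"] by simp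
      show "(\<lambda>K. P y x + real ?m * dK K) \<longlonglongrightarrow> P y x"
        using tendsto_add[OF tendsto_const tendsto_mult[OF tendsto_const dKlim], of "P y x" "real ?m"] by simp
    qed
    then have "(\<lambda>K. complex_of_real (W K x y)) \<longlonglongrightarrow> complex_of_real (P y x)" by (rule tendsto_of_real)
    moreover have "T K (exm ?n x) $$ (y,y) = complex_of_real (W K x y)" for K using TW x y by blast
    ultimately show ?thesis by simp
  qed
  show ?thesis using TW conv by blast
qed


theorem corollary2:
  fixes \<beta> :: real and a b :: "real list" and \<rho> \<sigma> :: "complex mat"
  assumes "\<beta> > 0" and "valid_ham a" and "valid_ham b"
    and "rel_nondeg a b"
    and "is_state (length a) \<rho>" and "is_state (length b) \<sigma>"
    and "\<FF> \<in> {CTO \<beta> a b, GPC \<beta> a b}"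
  shows "(\<exists>E \<in> \<FF>. E \<rho> = \<sigma> \<and> E (gibbs \<beta> a) = gibbs \<beta> b) \<longleftrightarrow>
         (diagonal_mat \<sigma> \<and>
          rel_maj (length a) (diag_vec \<rho>) (diag_vec (gibbs \<beta> a))
                  (length b) (diag_vec \<sigma>) (diag_vec (gibbs \<beta> b)))"
proof -
  let ?n = "length a" and ?m = "length b"
  have sr: "adj \<rho> = \<rho>" "\<rho> \<in> carrier_mat ?n ?n" using assms(5) unfolding is_state_def psd_def by auto
  have ss: "adj \<sigma> = \<sigma>" "\<sigma> \<in> carrier_mat ?m ?m" using assms(6) unfolding is_state_def psd_def by auto
  show ?thesis
  proof
    assume "\<exists>E \<in> \<FF>. E \<rho> = \<sigma> \<and> E (gibbs \<beta> a) = gibbs \<beta> b"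
    then obtain E where E: "E \<in> \<FF>" "E \<rho> = \<sigma>" "E (gibbs \<beta> a) = gibbs \<beta> b" by blast
    have ch: "channel ?n ?m E" using E(1) assms(7) unfolding CTO_def GPC_def by auto
    have dps: "DP ?n ?m E \<rho> \<and> DP ?n ?m E (gibbs \<beta> a)"
    proof (cases "\<FF> = CTO \<beta> a b")
      case True
      then have "E \<in> CTO \<beta> a b" using E by simp
      then show ?thesis using CTO_DP[OF assms(4)] sr gibbs_carrier by blast
    next
      case False
      then have "E \<in> GPC \<beta> a b" using E assms(7) by auto
      then have tc: "time_cov a b E" unfolding GPC_def by simp
      show ?thesis using GPC_DP[OF assms(4) ch tc] assms(5) gibbs_state[OF assms(2)] by blast
    qed
    have "diagonal_mat (E \<rho>) \<and> rel_maj ?n (diag_vec \<rho>) (diag_vec (gibbs \<beta> a)) ?m (diag_vec (E \<rho>)) (diag_vec (gibbs \<beta> b))"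
      by (rule rhs_from_DP[OF ch assms(5) gibbs_adj gibbs_carrier]) (use E ss dps in auto)
    then show "diagonal_mat \<sigma> \<and> rel_maj ?n (diag_vec \<rho>) (diag_vec (gibbs \<beta> a)) ?m (diag_vec \<sigma>) (diag_vec (gibbs \<beta> b))"
      using E by simp
  next
    assume r: "diagonal_mat \<sigma> \<and> rel_maj ?n (diag_vec \<rho>) (diag_vec (gibbs \<beta> a)) ?m (diag_vec \<sigma>) (diag_vec (gibbs \<beta> b))"
    then obtain P where P0: "\<forall>i<?m. \<forall>j<?n. 0 \<le> P i j" and P1: "\<forall>j<?n. (\<Sum>i<?m. P i j) = 1"
      and Pr: "\<forall>i<?m. (\<Sum>j<?n. P i j * diag_vec \<rho> j) = diag_vec \<sigma> i"
      and Pg: "\<forall>i<?m. (\<Sum>j<?n. P i j * diag_vec (gibbs \<beta> a) j) = diag_vec (gibbs \<beta> b) i"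
      unfolding rel_maj_def by blast
    let ?E = "clch ?n ?m P"
    have ch: "channel ?n ?m ?E" by (rule clch_channel[OF P0 P1])
    have e1: "?E \<rho> = \<sigma>" by (rule clch_eq[OF sr ss]) (use r Pr in auto)
    have e2: "?E (gibbs \<beta> a) = gibbs \<beta> b"
      by (rule clch_eq[OF gibbs_adj gibbs_carrier gibbs_adj gibbs_carrier gibbs_diagonal Pg])
    have gpc: "?E \<in> GPC \<beta> a b" unfolding GPC_def using ch clch_time_cov e2 by blast
    have cto: "?E \<in> CTO \<beta> a b"
    proof -
      obtain T where T: "\<forall>k. thermal_op \<beta> a b (T k)"
        and conv: "\<forall>x<?n. \<forall>y<?m. (\<lambda>k. T k (exm ?n x) $$ (y,y)) \<longlonglongrightarrow> complex_of_real (P y x)"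
        using approx_TO2[OF assms(1-4) P0 P1 Pg] by blast
      have "\<forall>X \<in> (carrier_mat ?n ?n :: complex mat set). \<forall>i < ?m. \<forall>j < ?m. (\<lambda>k. T k X $$ (i,j)) \<longlonglongrightarrow> ?E X $$ (i,j)"
      proof (intro ballI allI impI)
        fix X :: "complex mat" and i j assume X: "X \<in> carrier_mat ?n ?n" and i: "i < ?m" and j: "j < ?m"
        have eqn: "T k X $$ (i,j) = (if i = j then (\<Sum>x<?n. X $$ (x,x) * T k (exm ?n x) $$ (i,i)) else 0)" for k
          using thermal_DP[OF assms(4) T[rule_format, of k] X] i j unfolding DP_def by blast
        show "(\<lambda>k. T k X $$ (i,j)) \<longlonglongrightarrow> ?E X $$ (i,j)"
        proof (cases "i = j")
          case True
          have "(\<lambda>k. \<Sum>x<?n. X $$ (x,x) * T k (exm ?n x) $$ (i,i)) \<longlonglongrightarrow> (\<Sum>x<?n. X $$ (x,x) * complex_of_real (P i x))"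
            using conv i by (intro tendsto_sum tendsto_mult tendsto_const) auto
          then show ?thesis using True i unfolding eqn by (simp add: clch_def mult.commute)
        next
          case False
          then show ?thesis using i j unfolding eqn by (simp add: clch_def)
        qed
      qed
      then show ?thesis unfolding CTO_def using ch T by blast
    qed
    show "\<exists>E \<in> \<FF>. E \<rho> = \<sigma> \<and> E (gibbs \<beta> a) = gibbs \<beta> b"
      using assms(7) gpc cto e1 e2 by auto
  qed
qed

end
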